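(* Suppose the regularity conditions hold: $n_i(1)>0$ and $n_i(0)>0$ for every link $i\in E$, and $\sum_{j\in F_i}n_j(1)<\sum_{j\in B_i}n_j(1)$ for every non-root link $i\notin\mathscr S$. Then for every non-root link $i$ the equation $x=\prod_{j\in B_i}\big[(1-r_j)+r_jx\big]$ has a unique solution $\hat\pi_i\in(0,1)$, and the system $$\xi_i=(1-r_i)+r_i\cdot\mathbf 1(i\notin\mathscr S)\cdot\prod_{j\in B_i}\xi_j,\qquad i\in E,$$ has a unique solution $\hat\xi\in(0,1)^m$, given by $\hat\xi_i=1-r_i$ for $i\in\mathscr S$ and $\hat\xi_i=(1-r_i)+r_i\hat\pi_i$ otherwise. If in addition $\hat\xi\in\Xi$, then $\hat\theta=\Gamma^{-1}(\hat\xi)\in\Theta$ is the maximum likelihood estimate of $\theta$ over $\Theta$.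
   Context: Network: a finite set of directed links $E=\{1,\dots,m\}$ between nodes, forming a directed acyclic graph. For a link $i$, $C_i$ is the set of links whose tail is the head of $i$ (child links); $B_i$ is the set of links having the same tail as $i$ (brother links, including $i$ itself); $F_i$ is the set of links whose head is the tail of $i$ (parent links). A link $i$ is a leaf link if $C_i=\emptyset$; $R_i$ is the set of leaf links that are descendants of $i$ (including $i$ itself if $i$ is a leaf). The network is covered by $K\ge1$ multicast trees $T_1,\dots,T_K$: $T_k$ has a root link $S_k$ whose tail is a source node with no incoming link ($F_{S_k}=\emptyset$); its link set $E_k$ consists of $S_k$ and all descendants of $S_k$; every link $i\in E_k\setminus\{S_k\}$ has exactly one parent link in $E_k$, denoted $f^{(k)}_i\in F_i\cap E_k$; every link belongs to some $E_k$; each root link $S_k$ belongs only to $E_k$. $\mathscr S=\{S_1,\dots,S_K\}$. Loss model: each link $i$ has loss rate $\theta_i$, $\theta\in\Theta=(0,1)^m$. From the source of tree $T_k$, $n_k$ probes are sent; $X^{(k,t)}_i=1$ if probe $t$ of tree $k$ reached the head of link $i\in E_k$; a probe at the tail of link $i$ traverses it with probability $1-\theta_i$, independently across links, probes and trees; a probe not at the tail of $i$ does not reach its head; only $X^{(k,t)}_r$ for leaf links $r$ are observed. The maximum likelihood estimate is the maximizer over $\Theta$ of the log-probability of the observed data. Internal views: $Y^{(k,t)}_i=\max_{r\in R_i}X^{(k,t)}_r$ for $i\in E_k$; $n_{k,i}(1)=\sum_{t=1}^{n_k}Y^{(k,t)}_i$ for $i\in E_k$ and $0$ otherwise; $n_{k,S_k}(0)=n_k-n_{k,S_k}(1)$,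 $n_{k,i}(0)=n_{k,f^{(k)}_i}(1)-n_{k,i}(1)$ for $i\in E_k\setminus\{S_k\}$, and $0$ for $i\notin E_k$; $n_i(1)=\sum_k n_{k,i}(1)$, $n_i(0)=\sum_k n_{k,i}(0)$; $r_i=n_i(1)/(n_i(1)+n_i(0))$. Parameter map: $\xi_i(\theta)=\theta_i$ for leaf $i$ and $\xi_i(\theta)=\theta_i+(1-\theta_i)\prod_{j\in C_i}\xi_j(\theta)$ otherwise (recursively from the leaves); $\Gamma(\theta)=(\xi_i(\theta))_i$; $\Xi=\Gamma(\Theta)=\{\xi\in(0,1)^m:\xi_i>\prod_{j\in C_i}\xi_j$ for every non-leaf $i\}$; $\Gamma^{-1}(\xi)_i=\xi_i$ for leaf $i$ and $\Gamma^{-1}(\xi)_i=(\xi_i-\prod_{j\in C_i}\xi_j)/(1-\prod_{j\in C_i}\xi_j)$ otherwise. *)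

theory Defs
  imports Complex_Main
begin

text \<open>Links are the elements of a finite type 'e (so E = UNIV); nodes have type 'v.
  Trees are indexed by k < K; S k is the root link of tree k.\<close>

definition children :: "('e \<Rightarrow> 'v) \<Rightarrow> ('e \<Rightarrow> 'v) \<Rightarrow> 'e \<Rightarrow> 'e set" where
  "children tail head i = {j. tail j = head i}"

definition brothers :: "('e \<Rightarrow> 'v) \<Rightarrow> 'e \<Rightarrow> 'e set" where
  "brothers tail i = {j. tail j = tail i}"

definition parents :: "('e \<Rightarrow> 'v) \<Rightarrow> ('e \<Rightarrow> 'v) \<Rightarrow> 'e \<Rightarrow> 'e set" where
  "parents tail head i = {j. head j = tail i}"

definition is_leaf :: "('e \<Rightarrow> 'v) \<Rightarrow> ('e \<Rightarrow> 'v) \<Rightarrow> 'e \<Rightarrow> bool" where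
  "is_leaf tail head i \<longleftrightarrow> children tail head i = {}"

definition child_rel :: "('e \<Rightarrow> 'v) \<Rightarrow> ('e \<Rightarrow> 'v) \<Rightarrow> ('e \<times> 'e) set" where
  "child_rel tail head = {(i, j). j \<in> children tail head i}"

definition desc :: "('e \<Rightarrow> 'v) \<Rightarrow> ('e \<Rightarrow> 'v) \<Rightarrow> 'e \<Rightarrow> 'e set" where
  "desc tail head i = {j. (i, j) \<in> (child_rel tail head)\<^sup>*}"

definition leaf_desc :: "('e \<Rightarrow> 'v) \<Rightarrow> ('e \<Rightarrow> 'v) \<Rightarrow> 'e \<Rightarrow> 'e set" where
  "leaf_desc tail head i = {r \<in> desc tail head i. is_leaf tail head r}"

definition tree_links :: "('e \<Rightarrow> 'v) \<Rightarrow> ('e \<Rightarrow> 'v) \<Rightarrow> (nat \<Rightarrow> 'e) \<Rightarrow> nat \<Rightarrow> 'e set" where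
  "tree_links tail head S k = desc tail head (S k)"

definition tparent :: "('e \<Rightarrow> 'v) \<Rightarrow> ('e \<Rightarrow> 'v) \<Rightarrow> (nat \<Rightarrow> 'e) \<Rightarrow> nat \<Rightarrow> 'e \<Rightarrow> 'e" where
  "tparent tail head S k i = (THE j. j \<in> parents tail head i \<and> j \<in> tree_links tail head S k)"

definition roots :: "(nat \<Rightarrow> 'e) \<Rightarrow> nat \<Rightarrow> 'e set" where
  "roots S K = S ` {..<K}"

definition multicast_network ::
  "('e::finite \<Rightarrow> 'v) \<Rightarrow> ('e \<Rightarrow> 'v) \<Rightarrow> nat \<Rightarrow> (nat \<Rightarrow> 'e) \<Rightarrow> bool" where
  "multicast_network tail head K S \<longleftrightarrow>
     K \<ge> 1 \<and>
     acyclic {(tail e, head e) | e. True} \<and>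
     (\<forall>k<K. parents tail head (S k) = {}) \<and>
     (\<forall>k<K. \<forall>i \<in> tree_links tail head S k - {S k}.
        (\<exists>!j. j \<in> parents tail head i \<and> j \<in> tree_links tail head S k)) \<and>
     (\<forall>i. \<exists>k<K. i \<in> tree_links tail head S k) \<and>
     (\<forall>k<K. \<forall>l<K. S k \<in> tree_links tail head S l \<longrightarrow> l = k)"

text \<open>Loss model. For tree k and a set A of links whose heads the probe reached
  (A \<subseteq> E_k), the factor contributed by link i \<in> E_k.\<close>
definition link_factor ::
  "('e \<Rightarrow> 'v) \<Rightarrow> ('e \<Rightarrow> 'v) \<Rightarrow> (nat \<Rightarrow> 'e) \<Rightarrow> ('e \<Rightarrow> real) \<Rightarrow> nat \<Rightarrow> 'e set \<Rightarrow> 'e \<Rightarrow> real" where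
  "link_factor tail head S \<theta> k A i =
     (if i = S k \<or> tparent tail head S k i \<in> A
      then (if i \<in> A then 1 - \<theta> i else \<theta> i)
      else (if i \<in> A then 0 else 1))"

definition obs_prob ::
  "('e::finite \<Rightarrow> 'v) \<Rightarrow> ('e \<Rightarrow> 'v) \<Rightarrow> (nat \<Rightarrow> 'e) \<Rightarrow> ('e \<Rightarrow> real) \<Rightarrow> nat \<Rightarrow> 'e set \<Rightarrow> real" where
  "obs_prob tail head S \<theta> k Ob =
     (\<Sum>A \<in> {A. A \<subseteq> tree_links tail head S k \<and> {r \<in> A. is_leaf tail head r} = Ob}.
        \<Prod>i \<in> tree_links tail head S k. link_factor tail head S \<theta> k A i)"

text \<open>obs k t = set of leaf links reached by probe t (t < n k) of tree k.\<close>
definition loglik ::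
  "('e::finite \<Rightarrow> 'v) \<Rightarrow> ('e \<Rightarrow> 'v) \<Rightarrow> nat \<Rightarrow> (nat \<Rightarrow> 'e) \<Rightarrow> (nat \<Rightarrow> nat)
     \<Rightarrow> (nat \<Rightarrow> nat \<Rightarrow> 'e set) \<Rightarrow> ('e \<Rightarrow> real) \<Rightarrow> real" where
  "loglik tail head K S n obs \<theta> =
     (\<Sum>k<K. \<Sum>t<n k. ln (obs_prob tail head S \<theta> k (obs k t)))"

definition Theta :: "('e \<Rightarrow> real) set" where
  "Theta = {\<theta>. \<forall>i. 0 < \<theta> i \<and> \<theta> i < 1}"

definition is_MLE ::
  "('e::finite \<Rightarrow> 'v) \<Rightarrow> ('e \<Rightarrow> 'v) \<Rightarrow> nat \<Rightarrow> (nat \<Rightarrow> 'e) \<Rightarrow> (nat \<Rightarrow> nat)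
     \<Rightarrow> (nat \<Rightarrow> nat \<Rightarrow> 'e set) \<Rightarrow> ('e \<Rightarrow> real) \<Rightarrow> bool" where
  "is_MLE tail head K S n obs \<theta>h \<longleftrightarrow>
     \<theta>h \<in> Theta \<and> (\<forall>\<theta> \<in> Theta. loglik tail head K S n obs \<theta> \<le> loglik tail head K S n obs \<theta>h)"

definition nk1 ::
  "('e::finite \<Rightarrow> 'v) \<Rightarrow> ('e \<Rightarrow> 'v) \<Rightarrow> (nat \<Rightarrow> 'e) \<Rightarrow> (nat \<Rightarrow> nat)
     \<Rightarrow> (nat \<Rightarrow> nat \<Rightarrow> 'e set) \<Rightarrow> nat \<Rightarrow> 'e \<Rightarrow> nat" where
  "nk1 tail head S n obs k i =
     (if i \<in> tree_links tail head S k
      then card {t. t < n k \<and> (\<exists>r \<in> leaf_desc tail head i. r \<in> obs k t)}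
      else 0)"

definition nk0 ::
  "('e::finite \<Rightarrow> 'v) \<Rightarrow> ('e \<Rightarrow> 'v) \<Rightarrow> (nat \<Rightarrow> 'e) \<Rightarrow> (nat \<Rightarrow> nat)
     \<Rightarrow> (nat \<Rightarrow> nat \<Rightarrow> 'e set) \<Rightarrow> nat \<Rightarrow> 'e \<Rightarrow> nat" where
  "nk0 tail head S n obs k i =
     (if i \<notin> tree_links tail head S k then 0
      else if i = S k then n k - nk1 tail head S n obs k i
      else nk1 tail head S n obs k (tparent tail head S k i) - nk1 tail head S n obs k i)"

definition n1 ::
  "('e::finite \<Rightarrow> 'v) \<Rightarrow> ('e \<Rightarrow> 'v) \<Rightarrow> nat \<Rightarrow> (nat \<Rightarrow> 'e) \<Rightarrow> (nat \<Rightarrow> nat)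
     \<Rightarrow> (nat \<Rightarrow> nat \<Rightarrow> 'e set) \<Rightarrow> 'e \<Rightarrow> nat" where
  "n1 tail head K S n obs i = (\<Sum>k<K. nk1 tail head S n obs k i)"

definition n0 ::
  "('e::finite \<Rightarrow> 'v) \<Rightarrow> ('e \<Rightarrow> 'v) \<Rightarrow> nat \<Rightarrow> (nat \<Rightarrow> 'e) \<Rightarrow> (nat \<Rightarrow> nat)
     \<Rightarrow> (nat \<Rightarrow> nat \<Rightarrow> 'e set) \<Rightarrow> 'e \<Rightarrow> nat" where
  "n0 tail head K S n obs i = (\<Sum>k<K. nk0 tail head S n obs k i)"

definition rate ::
  "('e::finite \<Rightarrow> 'v) \<Rightarrow> ('e \<Rightarrow> 'v) \<Rightarrow> nat \<Rightarrow> (nat \<Rightarrow> 'e) \<Rightarrow> (nat \<Rightarrow> nat)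
     \<Rightarrow> (nat \<Rightarrow> nat \<Rightarrow> 'e set) \<Rightarrow> 'e \<Rightarrow> real" where
  "rate tail head K S n obs i =
     real (n1 tail head K S n obs i) / real (n1 tail head K S n obs i + n0 tail head K S n obs i)"

text \<open>Parameter space Xi = Gamma(Theta) and the inverse map.\<close>
definition Xi :: "('e::finite \<Rightarrow> 'v) \<Rightarrow> ('e \<Rightarrow> 'v) \<Rightarrow> ('e \<Rightarrow> real) set" where
  "Xi tail head = {\<xi>. (\<forall>i. 0 < \<xi> i \<and> \<xi> i < 1) \<and>
      (\<forall>i. \<not> is_leaf tail head i \<longrightarrow> \<xi> i > (\<Prod>j \<in> children tail head i. \<xi> j))}"

definition Gamma_inv :: "('e::finite \<Rightarrow> 'v) \<Rightarrow> ('e \<Rightarrow> 'v) \<Rightarrow> ('e \<Rightarrow> real) \<Rightarrow> 'e \<Rightarrow> real" where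
  "Gamma_inv tail head \<xi> i =
     (if is_leaf tail head i then \<xi> i
      else (\<xi> i - (\<Prod>j \<in> children tail head i. \<xi> j)) / (1 - (\<Prod>j \<in> children tail head i. \<xi> j)))"

end

theory Submission
  imports Defs
begin

lemma ln_less_minus_one_strict:
  fixes t :: real assumes "0 < t" "t \<noteq> 1" shows "ln t < t - 1"
proof -
  define s where "s = sqrt t"
  have s: "0 < s" "s \<noteq> 1" "t = s * s" using assms by (auto simp: s_def real_sqrt_eq_1_iff)
  have "ln t = 2 * ln s" using s by (simp add: ln_mult)
  also have "\<dots> \<le> 2 * (s - 1)" using ln_le_minus_one[OF s(1)] by simp
  also have "\<dots> < t - 1"
  proof -
    have "0 < (s - 1) * (s - 1)" using s by (cases "s > 1") (auto intro: mult_pos_pos mult_neg_neg)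
    then show ?thesis using s by (simp add: algebra_simps)
  qed
  finally show ?thesis .
qed

lemma gibbs_core:
  fixes a b :: "'x \<Rightarrow> real"
  assumes fin: "finite S" and a: "\<forall>x\<in>S. 0 < a x" and b: "\<forall>x\<in>S. 0 < b x"
    and eq: "sum b S = sum a S"
  shows "(\<Sum>x\<in>S. a x * ln (b x)) \<le> (\<Sum>x\<in>S. a x * ln (a x))"
    and "(\<Sum>x\<in>S. a x * ln (b x)) = (\<Sum>x\<in>S. a x * ln (a x)) \<Longrightarrow> \<forall>x\<in>S. a x = b x"
proof -
  have key: "a x * ln (b x) - a x * ln (a x) \<le> b x - a x" if "x \<in> S" for x
  proof -
    have ab: "0 < a x" "0 < b x" using a b that by auto
    have "a x * ln (b x) - a x * ln (a x) = a x * ln (b x / a x)"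
      using ab by (simp add: ln_div algebra_simps)
    also have "\<dots> \<le> a x * (b x / a x - 1)"
      using a b that ln_le_minus_one[of "b x / a x"] by (intro mult_left_mono) auto
    also have "\<dots> = b x - a x" using ab by (simp add: field_simps)
    finally show ?thesis .
  qed
  have key2: "a x * ln (b x) - a x * ln (a x) < b x - a x" if "x \<in> S" "a x \<noteq> b x" for x
  proof -
    have ab: "0 < a x" "0 < b x" using a b that by auto
    have "a x * ln (b x) - a x * ln (a x) = a x * ln (b x / a x)"
      using ab by (simp add: ln_div algebra_simps)
    also have "\<dots> < a x * (b x / a x - 1)"
      using a b that ln_less_minus_one_strict[of "b x / a x"] by (intro mult_strict_left_mono) auto
    also have "\<dots> = b x - a x" using ab by (simp add: field_simps)
    finally show ?thesis .
  qed
  have "(\<Sum>x\<in>S. a x * ln (b x) - a x * ln (a x)) \<le> (\<Sum>x\<in>S. b x - a x)"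
    using key by (rule sum_mono)
  then show "(\<Sum>x\<in>S. a x * ln (b x)) \<le> (\<Sum>x\<in>S. a x * ln (a x))"
    using eq by (simp add: sum_subtractf)
  show "\<forall>x\<in>S. a x = b x" if h: "(\<Sum>x\<in>S. a x * ln (b x)) = (\<Sum>x\<in>S. a x * ln (a x))"
  proof (rule ccontr)
    assume "\<not> (\<forall>x\<in>S. a x = b x)"
    then obtain x where "x \<in> S" "a x \<noteq> b x" by blast
    then have "(\<Sum>x\<in>S. a x * ln (b x) - a x * ln (a x)) < (\<Sum>x\<in>S. b x - a x)"
      using key key2 fin by (intro sum_strict_mono_ex1) auto
    then show False using eq h by (simp add: sum_subtractf)
  qed
qed

lemma wfrec_unfold:
  assumes "wf R" and "\<And>f g i. (\<And>j. (j, i) \<in> R \<Longrightarrow> f j = g j) \<Longrightarrow> F f i = F g i"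
  shows "wfrec R F i = F (wfrec R F) i"
proof -
  have "adm_wf R F" unfolding adm_wf_def using assms(2) by blast
  then show ?thesis using wfrec_fixpoint[OF assms(1)] by metis
qed


definition pp :: "('a \<Rightarrow> real) \<Rightarrow> 'a set \<Rightarrow> 'a set \<Rightarrow> real" where
  "pp \<xi> B A = (\<Prod>l\<in>A. 1 - \<xi> l) * (\<Prod>l\<in>B - A. \<xi> l)"

definition GG :: "('a \<Rightarrow> real) \<Rightarrow> ('a \<Rightarrow> real) \<Rightarrow> 'a set \<Rightarrow> real" where
  "GG r \<xi> B = (\<Sum>l\<in>B. r l * ln (1 - \<xi> l) + (1 - r l) * ln (\<xi> l)) - ln (1 - (\<Prod>l\<in>B. \<xi> l))"

lemma pp_sum: "finite B \<Longrightarrow> (\<Sum>A\<in>Pow B. pp \<xi> B A) = 1"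
  using prod_add[of B "\<lambda>l. 1 - \<xi> l" \<xi>] by (simp add: pp_def)

lemma pp_marg:
  assumes "finite B" "l \<in> B"
  shows "(\<Sum>A\<in>Pow B. if l \<in> A then pp \<xi> B A else 0) = 1 - \<xi> l"
proof -
  have "(\<Prod>x\<in>B. (1 - \<xi> x) + (\<xi>(l := 0)) x) = (\<Prod>x\<in>B. if x = l then 1 - \<xi> l else 1)"
    by (rule prod.cong) auto
  also have "\<dots> = 1 - \<xi> l" using assms by (simp add: prod.delta)
  finally have 1: "(\<Prod>x\<in>B. (1 - \<xi> x) + (\<xi>(l := 0)) x) = 1 - \<xi> l" .
  have 2: "(\<Prod>x\<in>A. 1 - \<xi> x) * (\<Prod>x\<in>B - A. (\<xi>(l := 0)) x) = (if l \<in> A then pp \<xi> B A else 0)"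
    if "A \<in> Pow B" for A
  proof (cases "l \<in> A")
    case True
    then have "(\<Prod>x\<in>B - A. (\<xi>(l := 0)) x) = (\<Prod>x\<in>B - A. \<xi> x)" by (intro prod.cong) auto
    then show ?thesis using True by (simp add: pp_def)
  next
    case False
    then have "l \<in> B - A" using assms by auto
    then have "(\<Prod>x\<in>B - A. (\<xi>(l := 0)) x) = 0" using assms
      by (intro prod_zero) auto
    then show ?thesis using False by simp
  qed
  have "(\<Sum>A\<in>Pow B. if l \<in> A then pp \<xi> B A else 0) =
        (\<Sum>A\<in>Pow B. (\<Prod>x\<in>A. 1 - \<xi> x) * (\<Prod>x\<in>B - A. (\<xi>(l := 0)) x))"
    using 2 by (intro sum.cong) auto
  also have "\<dots> = (\<Prod>x\<in>B. (1 - \<xi> x) + (\<xi>(l := 0)) x)"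
    by (rule prod_add[symmetric]) (use assms in auto)
  finally show ?thesis using 1 by simp
qed

lemma pp_pos:
  assumes "finite B" "A \<subseteq> B" "\<forall>l\<in>B. 0 < \<xi> l \<and> \<xi> l < 1"
  shows "0 < pp \<xi> B A"
  unfolding pp_def using assms by (intro mult_pos_pos prod_pos) auto

lemma ln_pp:
  assumes "finite B" "A \<subseteq> B" "\<forall>l\<in>B. 0 < \<xi> l \<and> \<xi> l < 1"
  shows "ln (pp \<xi> B A) = (\<Sum>l\<in>B. if l \<in> A then ln (1 - \<xi> l) else ln (\<xi> l))"
proof -
  have fA: "finite A" using assms finite_subset by blast
  have "ln (pp \<xi> B A) = ln (\<Prod>l\<in>A. 1 - \<xi> l) + ln (\<Prod>l\<in>B - A. \<xi> l)"
    unfolding pp_def using assms by (intro ln_mult_pos prod_pos) auto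
  also have "\<dots> = (\<Sum>l\<in>A. ln (1 - \<xi> l)) + (\<Sum>l\<in>B - A. ln (\<xi> l))"
  proof -
    have "ln (\<Prod>l\<in>A. 1 - \<xi> l) = (\<Sum>l\<in>A. ln (1 - \<xi> l))"
      using assms fA by (intro ln_prod) (auto dest!: subsetD[OF assms(2)])
    moreover have "ln (\<Prod>l\<in>B - A. \<xi> l) = (\<Sum>l\<in>B - A. ln (\<xi> l))"
      using assms by (intro ln_prod) auto
    ultimately show ?thesis by simp
  qed
  also have "\<dots> = (\<Sum>l\<in>B. if l \<in> A then ln (1 - \<xi> l) else ln (\<xi> l))"
  proof -
    have e: "B \<inter> {x. x \<in> A} = A" "B \<inter> - {x. x \<in> A} = B - A" using assms by auto
    show ?thesis using assms by (simp only: sum.If_cases e)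
  qed
  finally show ?thesis .
qed

lemma prod_lt1:
  fixes \<xi> :: "'a \<Rightarrow> real"
  assumes "finite B" "B \<noteq> {}" "\<forall>l\<in>B. 0 < \<xi> l \<and> \<xi> l < 1"
  shows "0 < (\<Prod>l\<in>B. \<xi> l) \<and> (\<Prod>l\<in>B. \<xi> l) < 1"
proof
  show "0 < (\<Prod>l\<in>B. \<xi> l)" using assms by (intro prod_pos) auto
  obtain l where l: "l \<in> B" using assms by auto
  have "(\<Prod>l\<in>B. \<xi> l) = \<xi> l * (\<Prod>l\<in>B - {l}. \<xi> l)" using l assms by (simp add: prod.remove)
  also have "\<dots> \<le> \<xi> l * 1"
    using assms l by (intro mult_left_mono prod_le_1) auto
  finally show "(\<Prod>l\<in>B. \<xi> l) < 1" using assms l by auto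
qed

lemma GG_repr:
  assumes fin: "finite B" and ne: "B \<noteq> {}" and h: "\<forall>l\<in>B. 0 < h l \<and> h l < 1"
    and marg: "\<forall>l\<in>B. 1 - h l = r l * (1 - (\<Prod>j\<in>B. h j))"
    and xi: "\<forall>l\<in>B. 0 < \<xi> l \<and> \<xi> l < 1"
  shows "GG r \<xi> B = (\<Sum>A\<in>Pow B - {{}}. (pp h B A / (1 - (\<Prod>j\<in>B. h j))) *
              ln (pp \<xi> B A / (1 - (\<Prod>j\<in>B. \<xi> j))))"
proof -
  define Ph where "Ph = (\<Prod>j\<in>B. h j)"
  define Px where "Px = (\<Prod>j\<in>B. \<xi> j)"
  define a where "a A = pp h B A / (1 - Ph)" for A
  define SS where "SS = Pow B - {{}}"
  have Ph: "0 < Ph" "Ph < 1" using prod_lt1[OF fin ne h] by (auto simp: Ph_def)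
  have Px: "0 < Px" "Px < 1" using prod_lt1[OF fin ne xi] by (auto simp: Px_def)
  have finS: "finite SS" using fin by (simp add: SS_def)
  have e0: "{} \<in> Pow B" by simp
  have sumS: "(\<Sum>A\<in>SS. f A) = (\<Sum>A\<in>Pow B. f A) - f {}" for f :: "'a set \<Rightarrow> real"
    unfolding SS_def using fin by (simp add: sum_diff1)
  have sa: "(\<Sum>A\<in>SS. a A) = 1"
  proof -
    have "(\<Sum>A\<in>SS. pp h B A) = 1 - Ph"
      using pp_sum[OF fin, of h] by (simp add: sumS pp_def Ph_def)
    then show ?thesis using Ph by (simp add: a_def sum_divide_distrib[symmetric])
  qed
  have ma: "(\<Sum>A\<in>SS. a A * (if l \<in> A then 1 else 0)) = r l" if l: "l \<in> B" for l
  proof -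
    have "(\<Sum>A\<in>SS. (if l \<in> A then pp h B A else 0)) = 1 - h l"
      using pp_marg[OF fin l, of h] by (simp add: sumS)
    have "(\<Sum>A\<in>SS. a A * (if l \<in> A then 1 else 0)) = (\<Sum>A\<in>SS. (if l \<in> A then pp h B A else 0) / (1 - Ph))"
      by (intro sum.cong) (auto simp: a_def)
    also have "\<dots> = (\<Sum>A\<in>SS. (if l \<in> A then pp h B A else 0)) / (1 - Ph)"
      by (rule sum_divide_distrib[symmetric])
    finally have "(\<Sum>A\<in>SS. a A * (if l \<in> A then 1 else 0)) = (1 - h l) / (1 - Ph)"
      using \<open>(\<Sum>A\<in>SS. (if l \<in> A then pp h B A else 0)) = 1 - h l\<close> by simp
    also have "\<dots> = r l" using marg l Ph by (simp add: Ph_def)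
    finally show ?thesis .
  qed
  have "(\<Sum>A\<in>SS. a A * ln (pp \<xi> B A / (1 - Px))) =
        (\<Sum>A\<in>SS. a A * (\<Sum>l\<in>B. if l \<in> A then ln (1 - \<xi> l) else ln (\<xi> l)) - a A * ln (1 - Px))"
  proof (rule sum.cong[OF refl])
    fix A assume A: "A \<in> SS"
    then have "A \<subseteq> B" by (auto simp: SS_def)
    then have "ln (pp \<xi> B A / (1 - Px)) = ln (pp \<xi> B A) - ln (1 - Px)"
      using pp_pos[OF fin _ xi] Px by (intro ln_divide_pos) auto
    then have "ln (pp \<xi> B A / (1 - Px)) = (\<Sum>l\<in>B. if l \<in> A then ln (1 - \<xi> l) else ln (\<xi> l)) - ln (1 - Px)"
      using ln_pp[OF fin \<open>A \<subseteq> B\<close> xi] by simp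
    then show "a A * ln (pp \<xi> B A / (1 - Px)) =
        a A * (\<Sum>l\<in>B. if l \<in> A then ln (1 - \<xi> l) else ln (\<xi> l)) - a A * ln (1 - Px)"
      by (simp only: right_diff_distrib)
  qed
  also have "\<dots> = (\<Sum>l\<in>B. \<Sum>A\<in>SS. a A * (if l \<in> A then ln (1 - \<xi> l) else ln (\<xi> l))) - ln (1 - Px)"
  proof -
    have "(\<Sum>A\<in>SS. a A * (\<Sum>l\<in>B. if l \<in> A then ln (1 - \<xi> l) else ln (\<xi> l))) =
          (\<Sum>A\<in>SS. \<Sum>l\<in>B. a A * (if l \<in> A then ln (1 - \<xi> l) else ln (\<xi> l)))"
      by (simp only: sum_distrib_left)
    also have "\<dots> = (\<Sum>l\<in>B. \<Sum>A\<in>SS. a A * (if l \<in> A then ln (1 - \<xi> l) else ln (\<xi> l)))"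
      by (rule sum.swap)
    finally have 1: "(\<Sum>A\<in>SS. a A * (\<Sum>l\<in>B. if l \<in> A then ln (1 - \<xi> l) else ln (\<xi> l))) =
          (\<Sum>l\<in>B. \<Sum>A\<in>SS. a A * (if l \<in> A then ln (1 - \<xi> l) else ln (\<xi> l)))" .
    have 2: "(\<Sum>A\<in>SS. a A * ln (1 - Px)) = ln (1 - Px)"
      by (simp only: sum_distrib_right[symmetric] sa mult_1_left)
    show ?thesis by (simp only: sum_subtractf 1 2)
  qed
  also have "\<dots> = (\<Sum>l\<in>B. r l * ln (1 - \<xi> l) + (1 - r l) * ln (\<xi> l)) - ln (1 - Px)"
  proof -
    have "(\<Sum>A\<in>SS. a A * (if l \<in> A then ln (1 - \<xi> l) else ln (\<xi> l))) =
          r l * ln (1 - \<xi> l) + (1 - r l) * ln (\<xi> l)" if l: "l \<in> B" for l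
    proof -
      have "(\<Sum>A\<in>SS. a A * (if l \<in> A then ln (1 - \<xi> l) else ln (\<xi> l))) =
            (\<Sum>A\<in>SS. a A * ln (\<xi> l) + (a A * (if l \<in> A then 1 else 0)) * (ln (1 - \<xi> l) - ln (\<xi> l)))"
        by (intro sum.cong) (auto simp: algebra_simps)
      also have "\<dots> = ln (\<xi> l) + r l * (ln (1 - \<xi> l) - ln (\<xi> l))"
        by (simp add: sum.distrib sum_distrib_right[symmetric] sa ma[OF l])
      finally show ?thesis by (simp add: algebra_simps)
    qed
    then show ?thesis by simp
  qed
  finally show ?thesis by (simp add: GG_def SS_def a_def Px_def Ph_def)
qed

lemma GG_gibbs:
  assumes fin: "finite B" and ne: "B \<noteq> {}" and h: "\<forall>l\<in>B. 0 < h l \<and> h l < 1"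
    and marg: "\<forall>l\<in>B. 1 - h l = r l * (1 - (\<Prod>j\<in>B. h j))"
    and xi: "\<forall>l\<in>B. 0 < \<xi> l \<and> \<xi> l < 1"
  shows "GG r \<xi> B \<le> GG r h B"
    and "GG r \<xi> B = GG r h B \<Longrightarrow> \<forall>A\<in>Pow B - {{}}.
            pp h B A / (1 - (\<Prod>j\<in>B. h j)) = pp \<xi> B A / (1 - (\<Prod>j\<in>B. \<xi> j))"
proof -
  define Ph where "Ph = (\<Prod>j\<in>B. h j)"
  define Px where "Px = (\<Prod>j\<in>B. \<xi> j)"
  define SS where "SS = Pow B - {{}}"
  have Ph: "0 < Ph" "Ph < 1" using prod_lt1[OF fin ne h] by (auto simp: Ph_def)
  have Px: "0 < Px" "Px < 1" using prod_lt1[OF fin ne xi] by (auto simp: Px_def)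
  have finS: "finite SS" using fin by (simp add: SS_def)
  have sumS: "(\<Sum>A\<in>SS. f A) = (\<Sum>A\<in>Pow B. f A) - f {}" for f :: "'a set \<Rightarrow> real"
    unfolding SS_def using fin by (simp add: sum_diff1)
  have s1: "(\<Sum>A\<in>SS. pp g B A / (1 - (\<Prod>j\<in>B. g j))) = 1"
    if g: "\<forall>l\<in>B. 0 < g l \<and> g l < 1" for g
  proof -
    have "(\<Sum>A\<in>SS. pp g B A) = 1 - (\<Prod>j\<in>B. g j)"
      using pp_sum[OF fin, of g] by (simp add: sumS pp_def)
    then show ?thesis using prod_lt1[OF fin ne g] by (simp add: sum_divide_distrib[symmetric])
  qed
  have pos: "\<forall>A\<in>SS. 0 < pp g B A / (1 - (\<Prod>j\<in>B. g j))"
    if g: "\<forall>l\<in>B. 0 < g l \<and> g l < 1" for g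
    using pp_pos[OF fin _ g] prod_lt1[OF fin ne g] by (auto simp: SS_def)
  define a where "a A = pp h B A / (1 - (\<Prod>j\<in>B. h j))" for A
  define b where "b A = pp \<xi> B A / (1 - (\<Prod>j\<in>B. \<xi> j))" for A
  have R1: "GG r \<xi> B = (\<Sum>A\<in>SS. a A * ln (b A))"
    unfolding a_def b_def SS_def by (rule GG_repr[OF fin ne h marg xi])
  have R2: "GG r h B = (\<Sum>A\<in>SS. a A * ln (a A))"
    unfolding a_def SS_def by (rule GG_repr[OF fin ne h marg h])
  have pa: "\<forall>A\<in>SS. 0 < a A" unfolding a_def by (rule pos[OF h])
  have pb: "\<forall>A\<in>SS. 0 < b A" unfolding b_def by (rule pos[OF xi])
  have sab: "sum b SS = sum a SS" unfolding a_def b_def by (simp only: s1[OF h] s1[OF xi])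
  note G = gibbs_core[OF finS pa pb sab]
  show "GG r \<xi> B \<le> GG r h B" unfolding R1 R2 by (rule G(1))
  show "GG r \<xi> B = GG r h B \<Longrightarrow> \<forall>A\<in>Pow B - {{}}.
            pp h B A / (1 - (\<Prod>j\<in>B. h j)) = pp \<xi> B A / (1 - (\<Prod>j\<in>B. \<xi> j))"
  proof -
    assume "GG r \<xi> B = GG r h B"
    then have "\<forall>A\<in>SS. a A = b A" unfolding R1 R2 by (rule G(2))
    then show ?thesis unfolding a_def b_def SS_def .
  qed
qed


lemma prod_bound:
  fixes a :: "'a \<Rightarrow> real"
  assumes "finite B" "\<forall>l\<in>B. 0 \<le> a l \<and> a l \<le> 1"
  shows "(\<Prod>l\<in>B. 1 - a l) \<le> 1 - sum a B + (sum a B)^2 / 2"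
  using assms
proof (induction B rule: finite_induct)
  case empty then show ?case by simp
next
  case (insert x F)
  define S where "S = sum a F"
  have ax: "0 \<le> a x" "a x \<le> 1" using insert by auto
  have "(\<Prod>l\<in>insert x F. 1 - a l) = (1 - a x) * (\<Prod>l\<in>F. 1 - a l)" using insert by simp
  also have "\<dots> \<le> (1 - a x) * (1 - S + S^2/2)"
    using insert ax by (intro mult_left_mono) (auto simp: S_def)
  also have "\<dots> \<le> 1 - (a x + S) + (a x + S)^2 / 2"
  proof -
    have "0 \<le> a x * (S * S)" using ax by simp
    moreover have "0 \<le> a x * a x" by simp
    ultimately have "0 \<le> a x * a x + a x * S * S" by (simp add: mult.assoc)
    then show ?thesis by (simp add: power2_eq_square algebra_simps)
  qed
  finally show ?case using insert by (simp add: S_def)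
qed

lemma fp_exists:
  fixes r :: "'a \<Rightarrow> real"
  assumes fin: "finite B" and r: "\<forall>l\<in>B. 0 < r l \<and> r l < 1" and R: "sum r B > 1"
  shows "\<exists>x. 0 < x \<and> x < 1 \<and> x = (\<Prod>l\<in>B. 1 - r l + r l * x)"
proof -
  define Rs where "Rs = sum r B"
  define e where "e = (Rs - 1) / Rs^2"
  have Rs: "Rs > 1" using R by (simp add: Rs_def)
  have e0: "0 < e" using Rs by (simp add: e_def)
  have e1: "e < 1"
  proof -
    have "Rs - 1 < Rs^2" using Rs by (simp add: power2_eq_square) (smt (verit) mult_less_cancel_right1)
    then show ?thesis using Rs by (simp add: e_def)
  qed
  define g where "g x = x - (\<Prod>l\<in>B. 1 - r l + r l * x)" for x
  have g0: "g 0 < 0" unfolding g_def using r by (simp, intro prod_pos) auto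
  have g1: "g (1 - e) > 0"
  proof -
    have "(\<Prod>l\<in>B. 1 - r l + r l * (1 - e)) = (\<Prod>l\<in>B. 1 - (e * r l))"
      by (intro prod.cong) (auto simp: algebra_simps)
    also have "\<dots> \<le> 1 - sum (\<lambda>l. e * r l) B + (sum (\<lambda>l. e * r l) B)^2 / 2"
      using r e0 e1 by (intro prod_bound fin) (auto intro: mult_le_one less_imp_le)
    also have "\<dots> = 1 - e * Rs + e^2 * Rs^2 / 2"
      by (simp add: Rs_def sum_distrib_left[symmetric] power_mult_distrib)
    also have "\<dots> = 1 - e * Rs + e * (Rs - 1) / 2"
      using Rs by (simp add: e_def power2_eq_square)
    also have "\<dots> < 1 - e"
    proof -
      have "e * (Rs - 1) / 2 < e * (Rs - 1)" using e0 Rs by simp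
      then show ?thesis by (simp add: algebra_simps)
    qed
    finally show ?thesis by (simp add: g_def)
  qed
  have cont: "continuous_on {0..1 - e} g"
    unfolding g_def by (intro continuous_intros)
  obtain x where x: "0 \<le> x" "x \<le> 1 - e" "g x = 0"
    using IVT'[of g 0 0 "1 - e", OF _ _ _ cont] g0 g1 e1 by auto
  have "x \<noteq> 0" using x g0 by auto
  then show ?thesis using x e0 by (intro exI[of _ x]) (auto simp: g_def)
qed

lemma fp_unique:
  fixes r :: "'a \<Rightarrow> real"
  assumes fin: "finite B" and r: "\<forall>l\<in>B. 0 < r l \<and> r l < 1"
    and x: "0 < x" "x < 1" "x = (\<Prod>l\<in>B. 1 - r l + r l * x)"
    and y: "0 < y" "y < 1" "y = (\<Prod>l\<in>B. 1 - r l + r l * y)"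
  shows "x = y"
proof -
  define hx where "hx l = 1 - r l + r l * x" for l
  define hy where "hy l = 1 - r l + r l * y" for l
  have ne: "B \<noteq> {}"
  proof
    assume "B = {}"
    from x(3)[unfolded this prod.empty] x(2) show False by simp
  qed
  have hx: "\<forall>l\<in>B. 0 < hx l \<and> hx l < 1"
  proof
    fix l assume l: "l \<in> B"
    have "0 < r l * (1 - x)" "r l * (1 - x) < 1"
      using r l x(1,2) by (auto intro: mult_pos_pos) (smt (verit) mult_less_cancel_right1 mult_nonneg_nonneg)
    then show "0 < hx l \<and> hx l < 1" by (simp add: hx_def algebra_simps)
  qed
  have hy: "\<forall>l\<in>B. 0 < hy l \<and> hy l < 1"
  proof
    fix l assume l: "l \<in> B"
    have "0 < r l * (1 - y)" "r l * (1 - y) < 1"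
      using r l y(1,2) by (auto intro: mult_pos_pos) (smt (verit) mult_less_cancel_right1 mult_nonneg_nonneg)
    then show "0 < hy l \<and> hy l < 1" by (simp add: hy_def algebra_simps)
  qed
  have px: "(\<Prod>j\<in>B. hx j) = x" unfolding hx_def by (rule x(3)[symmetric])
  have py: "(\<Prod>j\<in>B. hy j) = y" unfolding hy_def by (rule y(3)[symmetric])
  have mx: "\<forall>l\<in>B. 1 - hx l = r l * (1 - (\<Prod>j\<in>B. hx j))" unfolding px by (simp add: hx_def algebra_simps)
  have my: "\<forall>l\<in>B. 1 - hy l = r l * (1 - (\<Prod>j\<in>B. hy j))" unfolding py by (simp add: hy_def algebra_simps)
  have "GG r hy B \<le> GG r hx B" by (rule GG_gibbs(1)[OF fin ne hx mx hy])
  moreover have "GG r hx B \<le> GG r hy B" by (rule GG_gibbs(1)[OF fin ne hy my hx])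
  ultimately have "GG r hy B = GG r hx B" by simp
  then have eq: "\<forall>A\<in>Pow B - {{}}. pp hx B A / (1 - x) = pp hy B A / (1 - y)"
    using GG_gibbs(2)[OF fin ne hx mx hy] by (simp add: px py)
  define n where "n = card B"
  have n2: "n \<ge> 2"
  proof (rule ccontr)
    assume "\<not> n \<ge> 2"
    moreover have "n \<noteq> 0" using fin ne by (simp add: n_def)
    ultimately have "card B = 1" by (simp add: n_def)
    then obtain l where B: "B = {l}" by (auto simp: card_Suc_eq)
    have "(\<Prod>l\<in>B. 1 - r l + r l * x) = 1 - r l + r l * x" using B by simp
    then have e: "x = 1 - r l + r l * x" using x(3) by linarith
    have "(1 - r l) * (1 - x) > 0" using r x(2) B by simp
    moreover have "(1 - r l) * (1 - x) = 1 - x - r l + r l * x" by (simp add: algebra_simps)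
    ultimately show False using e by linarith
  qed
  have ppB: "pp g B B = (\<Prod>l\<in>B. r l) * (1 - z) ^ n" if "\<forall>l\<in>B. g l = 1 - r l + r l * z" for g z
  proof -
    have "pp g B B = (\<Prod>l\<in>B. r l * (1 - z))" unfolding pp_def using that
      by (simp, intro prod.cong) (auto simp: algebra_simps)
    also have "\<dots> = (\<Prod>l\<in>B. r l) * (1 - z) ^ n" by (simp add: prod.distrib n_def)
    finally show ?thesis .
  qed
  have "B \<in> Pow B - {{}}" using ne by auto
  then have "pp hx B B / (1 - x) = pp hy B B / (1 - y)" using eq by blast
  then have "(\<Prod>l\<in>B. r l) * (1 - x) ^ n / (1 - x) = (\<Prod>l\<in>B. r l) * (1 - y) ^ n / (1 - y)"
  proof -
    have "pp hx B B = (\<Prod>l\<in>B. r l) * (1 - x) ^ n" by (rule ppB) (simp add: hx_def)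
    moreover have "pp hy B B = (\<Prod>l\<in>B. r l) * (1 - y) ^ n" by (rule ppB) (simp add: hy_def)
    ultimately show ?thesis using \<open>pp hx B B / (1 - x) = pp hy B B / (1 - y)\<close> by simp
  qed
  then have A: "(\<Prod>l\<in>B. r l) * ((1 - x) ^ n / (1 - x)) = (\<Prod>l\<in>B. r l) * ((1 - y) ^ n / (1 - y))"
    by (simp only: times_divide_eq_right)
  have P: "(\<Prod>l\<in>B. r l) > 0" using r by (intro prod_pos) auto
  have pw: "(1 - z) ^ n / (1 - z) = (1 - z) ^ (n - 1)" if "z < 1" for z :: real
  proof -
    have "(1 - z) ^ n = (1 - z) * (1 - z) ^ (n - 1)" using n2
      by (metis One_nat_def Suc_pred less_le_trans pos2 power_Suc zero_less_Suc)
    then show ?thesis using that by simp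
  qed
  have "(\<Prod>l\<in>B. r l) * (1 - x) ^ (n - 1) = (\<Prod>l\<in>B. r l) * (1 - y) ^ (n - 1)"
    using A unfolding pw[OF x(2)] pw[OF y(2)] .
  then have "(1 - x) ^ (n - 1) = (1 - y) ^ (n - 1)" using P by simp
  moreover have "0 \<le> 1 - x" "0 \<le> 1 - y" "0 < n - 1" using x(2) y(2) n2 by auto
  ultimately have "1 - x = 1 - y" by (rule power_eq_imp_eq_base)
  then show ?thesis by linarith
qed


lemma prod_upd_factor:
  fixes f :: "'a \<Rightarrow> real"
  assumes "finite V" "p \<in> V"
  shows "(\<Prod>i\<in>V. if i = p then f i * c else f i) = c * (\<Prod>i\<in>V. f i)"
proof -
  have "(\<Prod>i\<in>V. if i = p then f i * c else f i) = (f p * c) * (\<Prod>i\<in>V - {p}. f i)"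
    using assms by (simp add: prod.remove)
  also have "\<dots> = c * (f p * (\<Prod>i\<in>V - {p}. f i))" by (simp add: algebra_simps)
  also have "\<dots> = c * (\<Prod>i\<in>V. f i)" using assms by (simp add: prod.remove)
  finally show ?thesis .
qed

lemma tree_sum:
  fixes V :: "'a set" and par :: "'a \<Rightarrow> 'a" and w :: "'a \<Rightarrow> bool \<Rightarrow> bool \<Rightarrow> real"
    and s :: "'a \<Rightarrow> bool \<Rightarrow> real"
  assumes "finite V" "r \<in> V" "\<forall>j\<in>V-{r}. par j \<in> V" "wf R" "\<forall>j\<in>V-{r}. (j, par j) \<in> R"
    "\<forall>i\<in>V. \<forall>b. s i b = w i False b * (\<Prod>c\<in>{j\<in>V-{r}. par j = i}. s c False)
                      + w i True b * (\<Prod>c\<in>{j\<in>V-{r}. par j = i}. s c True)"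
  shows "(\<Sum>A\<in>Pow V. \<Prod>i\<in>V. w i (i \<in> A) (i = r \<or> par i \<in> A)) = s r True"
  using assms
proof (induction "card V" arbitrary: V w rule: less_induct)
  case less
  note fin = less.prems(1) and rV = less.prems(2) and parV = less.prems(3) and wfR = less.prems(4)
    and parR = less.prems(5) and eqs = less.prems(6)
  show ?case
  proof (cases "V = {r}")
    case True
    have ch: "{j\<in>V-{r}. par j = r} = {}" using True by auto
    have "Pow V = {{}, {r}}" using True by (auto simp: Pow_singleton_iff)
    then have "(\<Sum>A\<in>Pow V. \<Prod>i\<in>V. w i (i \<in> A) (i = r \<or> par i \<in> A)) = w r False True + w r True True"
      using True by simp
    also have "\<dots> = s r True" using eqs[rule_format, OF rV, of True] unfolding ch by simp
    finally show ?thesis .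
  next
    case False
    then have "V - {r} \<noteq> {}" using rV by auto
    then obtain l0 where "l0 \<in> V - {r}" by blast
    from wfR[unfolded wf_eq_minimal, rule_format, OF this]
    obtain l where l: "l \<in> V - {r}" and lmin: "\<forall>y. (y, l) \<in> R \<longrightarrow> y \<notin> V - {r}"
      by blast
    have nochild: "\<forall>j\<in>V-{r}. par j \<noteq> l"
    proof (intro ballI notI)
      fix j assume j: "j \<in> V - {r}" "par j = l"
      then have "(j, l) \<in> R" using parR by force
      then show False using lmin j(1) by blast
    qed
    define p where "p = par l"
    have pV: "p \<in> V" using parV l by (simp add: p_def)
    have "(l, p) \<in> R" using parR l unfolding p_def by blast
    then have pl: "p \<noteq> l" using wfR by auto
    define V' where "V' = V - {l}"
    have V: "V = insert l V'" "l \<notin> V'" using l by (auto simp: V'_def)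
    have finV': "finite V'" using fin by (simp add: V'_def)
    have cardV': "card V' < card V" unfolding V'_def using fin l by (intro card_Diff1_less) auto
    have pV': "p \<in> V'" using pV pl by (simp add: V'_def)
    have rV': "r \<in> V'" using rV l by (auto simp: V'_def)
    define w' where "w' i a b = (if i = p then w p a b * (w l False a + w l True a) else w i a b)" for i a b
    have ch_eq: "{j\<in>V'-{r}. par j = i} = {j\<in>V-{r}. par j = i} - {l}" for i
      by (auto simp: V'_def)
    have ch_l: "{j\<in>V-{r}. par j = l} = {}" using nochild by auto
    have sl: "s l a = w l False a + w l True a" for a
      using eqs[rule_format, of l a] l unfolding ch_l by simp
    have IH: "(\<Sum>A\<in>Pow V'. \<Prod>i\<in>V'. w' i (i \<in> A) (i = r \<or> par i \<in> A)) = s r True"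
    proof (rule less.hyps[OF cardV' finV' rV'])
      show "\<forall>j\<in>V'-{r}. par j \<in> V'" using parV nochild by (auto simp: V'_def)
      show "wf R" by fact
      show "\<forall>j\<in>V'-{r}. (j, par j) \<in> R" using parR by (auto simp: V'_def)
      show "\<forall>i\<in>V'. \<forall>b. s i b = w' i False b * (\<Prod>c\<in>{j\<in>V'-{r}. par j = i}. s c False)
                      + w' i True b * (\<Prod>c\<in>{j\<in>V'-{r}. par j = i}. s c True)"
      proof (intro ballI allI)
        fix i b assume i: "i \<in> V'"
        show "s i b = w' i False b * (\<Prod>c\<in>{j\<in>V'-{r}. par j = i}. s c False)
                      + w' i True b * (\<Prod>c\<in>{j\<in>V'-{r}. par j = i}. s c True)"
        proof (cases "i = p")
          case True
          have fc: "finite {j\<in>V-{r}. par j = i}" using fin by simp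
          have lin: "l \<in> {j\<in>V-{r}. par j = i}" using l True by (simp add: p_def)
          have pe: "(\<Prod>c\<in>{j\<in>V-{r}. par j = i}. s c a) = s l a * (\<Prod>c\<in>{j\<in>V'-{r}. par j = i}. s c a)" for a
            unfolding ch_eq using fc lin by (simp add: prod.remove)
          have iV: "i \<in> V" using i by (simp add: V'_def)
          show ?thesis unfolding eqs[rule_format, OF iV, of b] pe using True by (simp add: w'_def sl algebra_simps)
        next
          case False
          have ce: "{j\<in>V'-{r}. par j = i} = {j\<in>V-{r}. par j = i}"
            unfolding ch_eq using False by (auto simp: p_def)
          have iV: "i \<in> V" using i by (simp add: V'_def)
          show ?thesis unfolding eqs[rule_format, OF iV, of b] ce using False by (simp add: w'_def)
        qed
      qed
    qed
    define F where "F A = (\<Prod>i\<in>V. w i (i \<in> A) (i = r \<or> par i \<in> A))" for A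
    define F' where "F' A = (\<Prod>i\<in>V'. w' i (i \<in> A) (i = r \<or> par i \<in> A))" for A
    have lr: "l \<noteq> r" using l by simp
    have key: "F A + F (insert l A) = F' A" if A: "A \<in> Pow V'" for A
    proof -
      define g where "g i = w i (i \<in> A) (i = r \<or> par i \<in> A)" for i
      have lA: "l \<notin> A" using A V by auto
      have "F A = w l False (p \<in> A) * (\<Prod>i\<in>V'. g i)"
        unfolding F_def g_def using V finV' lA lr by (simp add: p_def)
      moreover have "F (insert l A) = w l True (p \<in> A) * (\<Prod>i\<in>V'. g i)"
      proof -
        have "(\<Prod>i\<in>V'. w i (i \<in> insert l A) (i = r \<or> par i \<in> insert l A)) = (\<Prod>i\<in>V'. g i)"
        proof (rule prod.cong[OF refl])
          fix i assume i: "i \<in> V'"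
          then have "i \<noteq> l" using V by auto
          moreover have "i \<noteq> r \<Longrightarrow> par i \<noteq> l" using nochild i by (auto simp: V'_def)
          ultimately show "w i (i \<in> insert l A) (i = r \<or> par i \<in> insert l A) = g i"
            unfolding g_def by (cases "i = r") auto
        qed
        then show ?thesis unfolding F_def using V finV' lr pl by (simp add: p_def)
      qed
      moreover have "F' A = (w l False (p \<in> A) + w l True (p \<in> A)) * (\<Prod>i\<in>V'. g i)"
      proof -
        have "F' A = (\<Prod>i\<in>V'. if i = p then g i * (w l False (p \<in> A) + w l True (p \<in> A)) else g i)"
          unfolding F'_def g_def w'_def by (intro prod.cong) auto
        then show ?thesis using prod_upd_factor[OF finV' pV'] by simp
      qed
      ultimately show ?thesis by (simp add: algebra_simps)
    qed
    have "(\<Sum>A\<in>Pow V. F A) = (\<Sum>A\<in>Pow V'. F A) + (\<Sum>A\<in>insert l ` Pow V'. F A)"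
      unfolding V(1) Pow_insert using finV' V(2) by (intro sum.union_disjoint) auto
    also have "(\<Sum>A\<in>insert l ` Pow V'. F A) = (\<Sum>A\<in>Pow V'. F (insert l A))"
      using V(2) by (subst sum.reindex) (auto intro!: inj_onI simp: o_def Pow_def)
    also have "(\<Sum>A\<in>Pow V'. F A) + (\<Sum>A\<in>Pow V'. F (insert l A)) = (\<Sum>A\<in>Pow V'. F' A)"
      using key by (simp add: sum.distrib[symmetric])
    also have "\<dots> = s r True" using IH by (simp add: F'_def)
    finally show ?thesis by (simp add: F_def)
  qed
qed


definition crel :: "('e \<Rightarrow> 'v) \<Rightarrow> ('e \<Rightarrow> 'v) \<Rightarrow> ('e \<times> 'e) set" where
  "crel tail head = {(c, p). c \<in> children tail head p}"

definition xi_of :: "('e \<Rightarrow> 'v) \<Rightarrow> ('e \<Rightarrow> 'v) \<Rightarrow> ('e \<Rightarrow> real) \<Rightarrow> 'e \<Rightarrow> real" where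
  "xi_of tail head \<theta> = wfrec (crel tail head) (\<lambda>f i. if is_leaf tail head i then \<theta> i
      else \<theta> i + (1 - \<theta> i) * (\<Prod>j\<in>children tail head i. f j))"

definition sig_of :: "('e \<Rightarrow> 'v) \<Rightarrow> ('e \<Rightarrow> 'v) \<Rightarrow> ('e \<Rightarrow> real) \<Rightarrow> ('e \<Rightarrow> bool) \<Rightarrow> 'e \<Rightarrow> real" where
  "sig_of tail head \<theta> Y = wfrec (crel tail head) (\<lambda>f i. if Y i then (1 - \<theta> i) * (\<Prod>j\<in>children tail head i. f j)
      else xi_of tail head \<theta> i)"

lemma par_child_iff: "p \<in> parents tail head i \<longleftrightarrow> i \<in> children tail head p"
  by (simp add: parents_def children_def eq_commute)

lemma brothers_iff: "j \<in> brothers tail i \<longleftrightarrow> tail j = tail i"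
  by (simp add: brothers_def)

lemma children_brothers: "j \<in> children tail head p \<Longrightarrow> children tail head p = brothers tail j"
  by (auto simp: children_def brothers_def)

lemma parents_brothers: "j \<in> brothers tail i \<Longrightarrow> parents tail head j = parents tail head i"
  by (auto simp: parents_def brothers_def)

lemma brothers_brothers: "j \<in> brothers tail i \<Longrightarrow> brothers tail j = brothers tail i"
  by (auto simp: brothers_def)

lemma desc_self: "i \<in> desc tail head i"
  by (simp add: desc_def)

lemma desc_unfold: "desc tail head i = insert i (\<Union>c\<in>children tail head i. desc tail head c)"
proof
  show "desc tail head i \<subseteq> insert i (\<Union>c\<in>children tail head i. desc tail head c)"
  proof
    fix x assume "x \<in> desc tail head i"
    then have "(i, x) \<in> (child_rel tail head)\<^sup>*" by (simp add: desc_def)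
    then show "x \<in> insert i (\<Union>c\<in>children tail head i. desc tail head c)"
      by (rule converse_rtranclE) (auto simp: desc_def child_rel_def)
  qed
  show "insert i (\<Union>c\<in>children tail head i. desc tail head c) \<subseteq> desc tail head i"
    by (auto simp: desc_def child_rel_def intro: converse_rtrancl_into_rtrancl)
qed

lemma desc_child: "j \<in> children tail head i \<Longrightarrow> desc tail head j \<subseteq> desc tail head i"
  by (subst (2) desc_unfold) auto

lemma desc_trans: "j \<in> desc tail head i \<Longrightarrow> desc tail head j \<subseteq> desc tail head i"
  by (auto simp: desc_def)

lemma leaf_desc_leaf: "is_leaf tail head i \<Longrightarrow> leaf_desc tail head i = {i}"
proof -
  assume l: "is_leaf tail head i"
  then have "desc tail head i = {i}" by (subst desc_unfold) (simp add: is_leaf_def)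
  then show ?thesis using l by (auto simp: leaf_desc_def)
qed

lemma leaf_desc_nonleaf: "\<not> is_leaf tail head i \<Longrightarrow>
    leaf_desc tail head i = (\<Union>c\<in>children tail head i. leaf_desc tail head c)"
  unfolding leaf_desc_def by (subst desc_unfold) auto

lemma leaf_desc_mono: "j \<in> children tail head i \<Longrightarrow> leaf_desc tail head j \<subseteq> leaf_desc tail head i"
  using desc_child[of j tail head i] unfolding leaf_desc_def by blast

lemma crel_iff: "(c, p) \<in> crel tail head \<longleftrightarrow> c \<in> children tail head p"
  by (simp add: crel_def)

locale mnet =
  fixes tail head :: "'e::finite \<Rightarrow> 'v" and K :: nat and S :: "nat \<Rightarrow> 'e"
  assumes net: "multicast_network tail head K S"
begin

abbreviation T where "T k \<equiv> tree_links tail head S k"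

lemma acyc: "acyclic {(tail e, head e) |e. True}"
  using net by (simp add: multicast_network_def)
lemma rootpar: "k < K \<Longrightarrow> parents tail head (S k) = {}"
  using net by (simp add: multicast_network_def)
lemma uniq: "k < K \<Longrightarrow> i \<in> T k - {S k} \<Longrightarrow> \<exists>!j. j \<in> parents tail head i \<and> j \<in> T k"
  using net unfolding multicast_network_def by blast
lemma cover: "\<exists>k<K. i \<in> T k"
  using net unfolding multicast_network_def by blast
lemma rootonly: "k < K \<Longrightarrow> l < K \<Longrightarrow> S k \<in> T l \<Longrightarrow> l = k"
  using net unfolding multicast_network_def by blast

lemma trancl_nodes:
  assumes "(i, j) \<in> (child_rel tail head)\<^sup>+"
  shows "(tail i, tail j) \<in> {(tail e, head e) |e. True}\<^sup>+"
  using assms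
proof (induction rule: trancl_induct)
  case (base y)
  then have "tail y = head i" by (simp add: child_rel_def children_def)
  then show ?case by (intro r_into_trancl) auto
next
  case (step y z)
  then have "tail z = head y" by (simp add: child_rel_def children_def)
  then have "(tail y, tail z) \<in> {(tail e, head e) |e. True}" by auto
  with step.IH show ?case by (rule trancl_into_trancl)
qed

lemma wf_crel: "wf (crel tail head)"
proof -
  have "acyclic (child_rel tail head)"
    unfolding acyclic_def using trancl_nodes acyc unfolding acyclic_def by blast
  then have "acyclic ((child_rel tail head)\<inverse>)" by (simp add: acyclic_converse)
  moreover have "crel tail head = (child_rel tail head)\<inverse>"
    by (auto simp: crel_def child_rel_def)
  ultimately show ?thesis by (simp add: finite_acyclic_wf)
qed

lemma xi_eq: "xi_of tail head \<theta> i = (if is_leaf tail head i then \<theta> i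
      else \<theta> i + (1 - \<theta> i) * (\<Prod>j\<in>children tail head i. xi_of tail head \<theta> j))"
  unfolding xi_of_def
  by (rule wfrec_unfold[OF wf_crel]) (auto simp: crel_iff intro!: prod.cong)

lemma sig_eq: "sig_of tail head \<theta> Y i = (if Y i then (1 - \<theta> i) * (\<Prod>j\<in>children tail head i. sig_of tail head \<theta> Y j)
      else xi_of tail head \<theta> i)"
  unfolding sig_of_def
  by (rule wfrec_unfold[OF wf_crel]) (auto simp: crel_iff intro!: prod.cong)

lemma xi_range:
  assumes th: "\<theta> \<in> Theta"
  shows "0 < xi_of tail head \<theta> i \<and> xi_of tail head \<theta> i < 1"
  using wf_crel
proof (induction i rule: wf_induct_rule)
  case (less i)
  have t: "0 < \<theta> i" "\<theta> i < 1" using th by (auto simp: Theta_def)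
  show ?case
  proof (cases "is_leaf tail head i")
    case True then show ?thesis using t by (simp add: xi_eq[of \<theta> i])
  next
    case False
    define P where "P = (\<Prod>j\<in>children tail head i. xi_of tail head \<theta> j)"
    have "\<forall>j\<in>children tail head i. 0 < xi_of tail head \<theta> j \<and> xi_of tail head \<theta> j < 1"
    proof
      fix j assume "j \<in> children tail head i"
      then have "(j, i) \<in> crel tail head" by (simp add: crel_iff)
      then show "0 < xi_of tail head \<theta> j \<and> xi_of tail head \<theta> j < 1" by (rule less)
    qed
    then have P: "0 < P" "P < 1" using prod_lt1[of "children tail head i"] False
      by (auto simp: P_def is_leaf_def)
    have "0 < (1 - \<theta> i) * P" "(1 - \<theta> i) * P < 1 - \<theta> i" using t P by auto
    have "xi_of tail head \<theta> i = \<theta> i + (1 - \<theta> i) * P" using False by (simp add: xi_eq[of \<theta> i] P_def)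
    then show ?thesis using t \<open>0 < (1 - \<theta> i) * P\<close> \<open>(1 - \<theta> i) * P < 1 - \<theta> i\<close> by linarith
  qed
qed

lemma root_in: "S k \<in> T k"
  by (simp add: tree_links_def desc_self)

lemma T_closed: "i \<in> T k \<Longrightarrow> j \<in> children tail head i \<Longrightarrow> j \<in> T k"
proof -
  assume a: "i \<in> T k" "j \<in> children tail head i"
  have "desc tail head i \<subseteq> desc tail head (S k)" using a(1) desc_trans[of i tail head "S k"] unfolding tree_links_def by blast
  moreover have "j \<in> desc tail head i" using desc_child[OF a(2)] desc_self[of j tail head] by blast
  ultimately show "j \<in> T k" unfolding tree_links_def by blast
qed

lemma tp:
  assumes "k < K" "i \<in> T k - {S k}"
  shows "tparent tail head S k i \<in> parents tail head i \<and> tparent tail head S k i \<in> T k"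
  unfolding tparent_def using theI'[OF uniq[OF assms]] .

lemma tp_unique:
  assumes "k < K" "i \<in> T k - {S k}" "p \<in> parents tail head i" "p \<in> T k"
  shows "p = tparent tail head S k i"
  unfolding tparent_def using the1_equality[OF uniq[OF assms(1,2)]] assms(3,4) by simp

lemma tp_child:
  assumes "k < K" "i \<in> T k - {S k}"
  shows "i \<in> children tail head (tparent tail head S k i)"
  using tp[OF assms] by (simp add: par_child_iff)

lemma ch_tree:
  assumes "k < K" "i \<in> T k"
  shows "{j \<in> T k - {S k}. tparent tail head S k j = i} = children tail head i"
proof
  show "{j \<in> T k - {S k}. tparent tail head S k j = i} \<subseteq> children tail head i"
    using tp_child[OF assms(1)] by blast
  show "children tail head i \<subseteq> {j \<in> T k - {S k}. tparent tail head S k j = i}"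
  proof
    fix j assume j: "j \<in> children tail head i"
    have jT: "j \<in> T k" using T_closed assms j by blast
    have ip: "i \<in> parents tail head j" using j by (simp add: par_child_iff)
    then have "j \<noteq> S k" using rootpar[OF assms(1)] by auto
    then show "j \<in> {j \<in> T k - {S k}. tparent tail head S k j = i}"
      using jT tp_unique[OF assms(1) _ ip assms(2)] by auto
  qed
qed

lemma nonroot_iff: "i \<notin> roots S K \<longleftrightarrow> parents tail head i \<noteq> {}"
proof
  assume "i \<notin> roots S K"
  obtain k where k: "k < K" "i \<in> T k" using cover by blast
  then have "i \<noteq> S k" using \<open>i \<notin> roots S K\<close> by (auto simp: roots_def)
  then show "parents tail head i \<noteq> {}" using tp[OF k(1)] k(2) by blast
next
  assume "parents tail head i \<noteq> {}"
  then show "i \<notin> roots S K" using rootpar by (auto simp: roots_def)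
qed

end


lemma prod_indicator:
  assumes "finite I"
  shows "(\<Prod>i\<in>I. if P i then 1 else (0::real)) = (if \<forall>i\<in>I. P i then 1 else 0)"
proof (cases "\<forall>i\<in>I. P i")
  case True then show ?thesis by simp
next
  case False
  then obtain i where "i \<in> I" "\<not> P i" by blast
  then show ?thesis using assms False by (intro trans[OF prod_zero]) auto
qed

locale mdata = mnet tail head K S for tail head :: "'e::finite \<Rightarrow> 'v" and K S +
  fixes n :: "nat \<Rightarrow> nat" and obs :: "nat \<Rightarrow> nat \<Rightarrow> 'e set"
  assumes data: "\<forall>k<K. \<forall>t<n k. obs k t \<subseteq> {r \<in> tree_links tail head S k. is_leaf tail head r}"
begin

definition Y :: "nat \<Rightarrow> nat \<Rightarrow> 'e \<Rightarrow> bool" where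
  "Y k t i \<longleftrightarrow> (\<exists>r\<in>leaf_desc tail head i. r \<in> obs k t)"

lemma Y_mono: "c \<in> children tail head p \<Longrightarrow> Y k t c \<Longrightarrow> Y k t p"
  using leaf_desc_mono[of c tail head p] unfolding Y_def by blast

lemma Y_leaf: "is_leaf tail head i \<Longrightarrow> Y k t i \<longleftrightarrow> i \<in> obs k t"
  by (simp add: Y_def leaf_desc_leaf)

lemma Y_nonleaf: "\<not> is_leaf tail head i \<Longrightarrow> Y k t i \<longleftrightarrow> (\<exists>c\<in>children tail head i. Y k t c)"
  by (simp add: Y_def leaf_desc_nonleaf)

lemma nk1_card: "i \<in> T k \<Longrightarrow> nk1 tail head S n obs k i = card {t. t < n k \<and> Y k t i}"
  by (simp add: nk1_def Y_def)

lemma nk1_out: "i \<notin> T k \<Longrightarrow> nk1 tail head S n obs k i = 0"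
  by (simp add: nk1_def)

lemma nk0_out: "i \<notin> T k \<Longrightarrow> nk0 tail head S n obs k i = 0"
  by (simp add: nk0_def)

lemma nk1_le_tp:
  assumes "k < K" "i \<in> T k - {S k}"
  shows "nk1 tail head S n obs k i \<le> nk1 tail head S n obs k (tparent tail head S k i)"
proof -
  have tpT: "tparent tail head S k i \<in> T k" using tp[OF assms] by blast
  have "{t. t < n k \<and> Y k t i} \<subseteq> {t. t < n k \<and> Y k t (tparent tail head S k i)}"
    using Y_mono[OF tp_child[OF assms]] by blast
  then show ?thesis using assms tpT by (simp add: nk1_card card_mono)
qed

lemma count_k:
  assumes k: "k < K" and j: "parents tail head j \<noteq> {}"
  shows "nk1 tail head S n obs k j + nk0 tail head S n obs k j =
         (\<Sum>p\<in>parents tail head j. nk1 tail head S n obs k p)"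
proof (cases "j \<in> T k")
  case True
  have jS: "j \<noteq> S k" using j rootpar[OF k] by auto
  then have jT: "j \<in> T k - {S k}" using True by simp
  define q where "q = tparent tail head S k j"
  have q: "q \<in> parents tail head j" "q \<in> T k" using tp[OF k jT] by (auto simp: q_def)
  have "nk1 tail head S n obs k j + nk0 tail head S n obs k j = nk1 tail head S n obs k q"
    using nk1_le_tp[OF k jT] True jS by (simp add: nk0_def q_def)
  also have "\<dots> = (\<Sum>p\<in>parents tail head j. nk1 tail head S n obs k p)"
  proof -
    have "(\<Sum>p\<in>parents tail head j. nk1 tail head S n obs k p) =
          nk1 tail head S n obs k q + (\<Sum>p\<in>parents tail head j - {q}. nk1 tail head S n obs k p)"
      using q by (simp add: sum.remove)
    moreover have "(\<Sum>p\<in>parents tail head j - {q}. nk1 tail head S n obs k p) = 0"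
    proof (rule sum.neutral, rule ballI)
      fix p assume p: "p \<in> parents tail head j - {q}"
      have "p \<notin> T k"
      proof
        assume "p \<in> T k"
        then have "p = q" using tp_unique[OF k jT, of p] p unfolding q_def by blast
        then show False using p by simp
      qed
      then show "nk1 tail head S n obs k p = 0" by (rule nk1_out)
    qed
    ultimately show ?thesis by simp
  qed
  finally show ?thesis .
next
  case False
  have "\<forall>p\<in>parents tail head j. p \<notin> T k"
  proof
    fix p assume "p \<in> parents tail head j"
    then have "j \<in> children tail head p" by (simp add: par_child_iff)
    then show "p \<notin> T k" using False T_closed[of p k j] by blast
  qed
  then show ?thesis using False by (simp add: nk1_out nk0_out)
qed

lemma count:
  assumes j: "parents tail head j \<noteq> {}"
  shows "n1 tail head K S n obs j + n0 tail head K S n obs j =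
         (\<Sum>p\<in>parents tail head j. n1 tail head K S n obs p)"
proof -
  have "n1 tail head K S n obs j + n0 tail head K S n obs j =
        (\<Sum>k<K. nk1 tail head S n obs k j + nk0 tail head S n obs k j)"
    by (simp add: n1_def n0_def sum.distrib)
  also have "\<dots> = (\<Sum>k<K. \<Sum>p\<in>parents tail head j. nk1 tail head S n obs k p)"
    using count_k[OF _ j] by simp
  also have "\<dots> = (\<Sum>p\<in>parents tail head j. \<Sum>k<K. nk1 tail head S n obs k p)"
    by (rule sum.swap)
  finally show ?thesis by (simp add: n1_def)
qed

end


context mnet begin

lemma sig_pos:
  assumes th: "\<theta> \<in> Theta"
  shows "0 < sig_of tail head \<theta> Y i"
  using wf_crel
proof (induction i rule: wf_induct_rule)
  case (less i)
  have t: "0 < \<theta> i" "\<theta> i < 1" using th by (auto simp: Theta_def)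
  show ?case
  proof (cases "Y i")
    case True
    have "\<forall>j\<in>children tail head i. 0 < sig_of tail head \<theta> Y j"
    proof
      fix j assume "j \<in> children tail head i"
      then have "(j, i) \<in> crel tail head" by (simp add: crel_iff)
      then show "0 < sig_of tail head \<theta> Y j" by (rule less)
    qed
    then have "0 < (\<Prod>j\<in>children tail head i. sig_of tail head \<theta> Y j)" by (intro prod_pos) auto
    then show ?thesis using True t by (simp add: sig_eq[of \<theta> Y i])
  next
    case False
    then show ?thesis using xi_range[OF th, of i] by (simp add: sig_eq[of \<theta> Y i])
  qed
qed

end

context mdata begin

lemma obs_prob_eq:
  assumes k: "k < K" and t: "t < n k" and th: "\<theta> \<in> Theta"
  shows "obs_prob tail head S \<theta> k (obs k t) = sig_of tail head \<theta> (Y k t) (S k)"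
proof -
  define Ob where "Ob = obs k t"
  have Ob: "Ob \<subseteq> {r \<in> T k. is_leaf tail head r}" using data k t by (simp add: Ob_def)
  define w where "w i a b = (if b then (if a then 1 - \<theta> i else \<theta> i) else (if a then 0 else 1)) *
      (if is_leaf tail head i then (if a = (i \<in> Ob) then 1 else 0) else (1::real))" for i a b
  define sg where "sg i b = (if b then sig_of tail head \<theta> (Y k t) i else (if Y k t i then 0 else 1))" for i b
  have finT: "finite (T k)" by simp
  have step1: "(\<Prod>i\<in>T k. w i (i \<in> A) (i = S k \<or> tparent tail head S k i \<in> A)) =
        (if {r \<in> A. is_leaf tail head r} = Ob then (\<Prod>i\<in>T k. link_factor tail head S \<theta> k A i) else 0)"
    if A: "A \<subseteq> T k" for A
  proof -
    have "(\<Prod>i\<in>T k. w i (i \<in> A) (i = S k \<or> tparent tail head S k i \<in> A)) =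
          (\<Prod>i\<in>T k. link_factor tail head S \<theta> k A i) *
          (\<Prod>i\<in>T k. if (is_leaf tail head i \<longrightarrow> (i \<in> A \<longleftrightarrow> i \<in> Ob)) then 1 else 0)"
      unfolding prod.distrib[symmetric] by (intro prod.cong) (auto simp: w_def link_factor_def)
    also have "(\<Prod>i\<in>T k. if (is_leaf tail head i \<longrightarrow> (i \<in> A \<longleftrightarrow> i \<in> Ob)) then 1 else (0::real)) =
          (if {r \<in> A. is_leaf tail head r} = Ob then 1 else 0)"
    proof -
      have "(\<forall>i\<in>T k. is_leaf tail head i \<longrightarrow> (i \<in> A \<longleftrightarrow> i \<in> Ob)) \<longleftrightarrow> {r \<in> A. is_leaf tail head r} = Ob"
        using A Ob by blast
      then show ?thesis by (simp add: prod_indicator[OF finT])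
    qed
    finally show ?thesis by simp
  qed
  have "obs_prob tail head S \<theta> k Ob =
        (\<Sum>A\<in>{A \<in> Pow (T k). {r \<in> A. is_leaf tail head r} = Ob}. \<Prod>i\<in>T k. link_factor tail head S \<theta> k A i)"
    unfolding obs_prob_def by (intro sum.cong) auto
  also have "\<dots> = (\<Sum>A\<in>Pow (T k). if {r \<in> A. is_leaf tail head r} = Ob then \<Prod>i\<in>T k. link_factor tail head S \<theta> k A i else 0)"
    by (rule sum.inter_filter) simp
  also have "\<dots> = (\<Sum>A\<in>Pow (T k). \<Prod>i\<in>T k. w i (i \<in> A) (i = S k \<or> tparent tail head S k i \<in> A))"
    using step1 by (intro sum.cong) auto
  also have "\<dots> = sg (S k) True"
  proof (rule tree_sum[OF finT root_in _ wf_crel])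
    show "\<forall>j\<in>T k - {S k}. tparent tail head S k j \<in> T k" using tp[OF k] by blast
    show "\<forall>j\<in>T k - {S k}. (j, tparent tail head S k j) \<in> crel tail head"
      using tp_child[OF k] by (simp add: crel_iff)
    show "\<forall>i\<in>T k. \<forall>b. sg i b = w i False b * (\<Prod>c\<in>{j \<in> T k - {S k}. tparent tail head S k j = i}. sg c False)
        + w i True b * (\<Prod>c\<in>{j \<in> T k - {S k}. tparent tail head S k j = i}. sg c True)"
    proof (intro ballI allI)
      fix i b assume i: "i \<in> T k"
      define Ch where "Ch = children tail head i"
      have ch: "{j \<in> T k - {S k}. tparent tail head S k j = i} = Ch" using ch_tree[OF k i] by (simp add: Ch_def)
      have pF: "(\<Prod>c\<in>Ch. sg c False) = (if \<forall>c\<in>Ch. \<not> Y k t c then 1 else 0)"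
        unfolding sg_def using prod_indicator[of Ch "\<lambda>c. \<not> Y k t c"] by simp
      have si: "sig_of tail head \<theta> (Y k t) i = (if Y k t i then (1 - \<theta> i) * (\<Prod>c\<in>Ch. sig_of tail head \<theta> (Y k t) c)
          else xi_of tail head \<theta> i)" unfolding Ch_def by (rule sig_eq)
      have xi: "xi_of tail head \<theta> i = (if is_leaf tail head i then \<theta> i
          else \<theta> i + (1 - \<theta> i) * (\<Prod>c\<in>Ch. xi_of tail head \<theta> c))" unfolding Ch_def by (rule xi_eq)
      show "sg i b = w i False b * (\<Prod>c\<in>{j \<in> T k - {S k}. tparent tail head S k j = i}. sg c False)
        + w i True b * (\<Prod>c\<in>{j \<in> T k - {S k}. tparent tail head S k j = i}. sg c True)"
        unfolding ch
      proof (cases "is_leaf tail head i")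
        case True
        then have "Ch = {}" by (simp add: Ch_def is_leaf_def)
        moreover have "Y k t i \<longleftrightarrow> i \<in> Ob" using Y_leaf[OF True] by (simp add: Ob_def)
        ultimately show "sg i b = w i False b * (\<Prod>c\<in>Ch. sg c False) + w i True b * (\<Prod>c\<in>Ch. sg c True)"
          using True si xi by (auto simp: sg_def w_def)
      next
        case False
        have Yi: "Y k t i \<longleftrightarrow> (\<exists>c\<in>Ch. Y k t c)" using Y_nonleaf[OF False] by (simp add: Ch_def)
        show "sg i b = w i False b * (\<Prod>c\<in>Ch. sg c False) + w i True b * (\<Prod>c\<in>Ch. sg c True)"
        proof (cases "Y k t i")
          case True
          then have "(\<Prod>c\<in>Ch. sg c False) = 0" using pF Yi by simp
          then show ?thesis using True False si by (simp add: sg_def w_def)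
        next
          case nY: False
          then have "(\<Prod>c\<in>Ch. sg c False) = 1" using pF Yi by simp
          moreover have "(\<Prod>c\<in>Ch. sg c True) = (\<Prod>c\<in>Ch. xi_of tail head \<theta> c)"
          proof (rule prod.cong[OF refl])
            fix c assume "c \<in> Ch"
            then have "\<not> Y k t c" using nY Yi by blast
            then show "sg c True = xi_of tail head \<theta> c" by (simp add: sg_def sig_eq[of \<theta> "Y k t" c])
          qed
          ultimately show ?thesis using nY False si xi by (simp add: sg_def w_def)
        qed
      qed
    qed
  qed
  also have "\<dots> = sig_of tail head \<theta> (Y k t) (S k)" by (simp add: sg_def)
  finally show ?thesis by (simp add: Ob_def)
qed

end


context mnet begin

lemma ln_sig_root:
  assumes k: "k < K" and th: "\<theta> \<in> Theta"
    and mono: "\<And>p c. c \<in> children tail head p \<Longrightarrow> Y c \<Longrightarrow> Y p"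
  shows "ln (sig_of tail head \<theta> Y (S k)) =
    (\<Sum>i\<in>T k. if Y i then ln (1 - \<theta> i)
              else if i = S k \<or> Y (tparent tail head S k i) then ln (xi_of tail head \<theta> i) else 0)"
proof -
  define \<sigma> where "\<sigma> = sig_of tail head \<theta> Y"
  define tpk where "tpk = tparent tail head S k"
  define \<phi> where "\<phi> i = (if Y i then ln (1 - \<theta> i)
              else if i = S k \<or> Y (tpk i) then ln (xi_of tail head \<theta> i) else 0)" for i
  define \<alpha> where "\<alpha> i = (if Y i then ln (\<sigma> i) else 0)" for i
  define \<beta> where "\<beta> i = (if Y (tpk i) then ln (\<sigma> i) else 0)" for i
  define \<gamma> where "\<gamma> i = (if \<not> Y i \<and> (i = S k \<or> Y (tpk i)) then ln (\<sigma> i) else 0)" for i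
  have finT: "finite (T k)" by simp
  have spos: "0 < \<sigma> i" for i using sig_pos[OF th] by (simp add: \<sigma>_def)
  have snz: "\<sigma> i \<noteq> 0" for i using spos[of i] by simp
  have t: "0 < \<theta> i" "\<theta> i < 1" for i using th by (auto simp: Theta_def)
  have a: "\<phi> i + (\<Sum>c\<in>children tail head i. \<beta> c) = \<alpha> i + \<gamma> i" if i: "i \<in> T k" for i
  proof (cases "Y i")
    case True
    have "\<sigma> i = (1 - \<theta> i) * (\<Prod>c\<in>children tail head i. \<sigma> c)"
      using True by (simp add: \<sigma>_def sig_eq[of \<theta> Y i])
    then have "ln (\<sigma> i) = ln (1 - \<theta> i) + (\<Sum>c\<in>children tail head i. ln (\<sigma> c))"
    proof -
      have "ln (\<Prod>c\<in>children tail head i. \<sigma> c) = (\<Sum>c\<in>children tail head i. ln (\<sigma> c))"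
        by (intro ln_prod) (simp_all add: snz)
      then show ?thesis using \<open>\<sigma> i = _\<close> t[of i] spos by (simp add: ln_mult_pos prod_pos)
    qed
    moreover have "(\<Sum>c\<in>children tail head i. \<beta> c) = (\<Sum>c\<in>children tail head i. ln (\<sigma> c))"
    proof (rule sum.cong[OF refl])
      fix c assume c: "c \<in> children tail head i"
      then have "c \<in> {j \<in> T k - {S k}. tpk j = i}" using ch_tree[OF k i] by (simp add: tpk_def)
      then show "\<beta> c = ln (\<sigma> c)" using True by (simp add: \<beta>_def)
    qed
    ultimately show ?thesis using True by (simp add: \<phi>_def \<alpha>_def \<gamma>_def)
  next
    case False
    have "(\<Sum>c\<in>children tail head i. \<beta> c) = 0"
    proof (rule sum.neutral, rule ballI)
      fix c assume c: "c \<in> children tail head i"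
      then have "c \<in> {j \<in> T k - {S k}. tpk j = i}" using ch_tree[OF k i] by (simp add: tpk_def)
      then show "\<beta> c = 0" using False by (simp add: \<beta>_def)
    qed
    moreover have "\<sigma> i = xi_of tail head \<theta> i" using False by (simp add: \<sigma>_def sig_eq[of \<theta> Y i])
    ultimately show ?thesis using False by (simp add: \<phi>_def \<alpha>_def \<gamma>_def)
  qed
  have b: "(\<Sum>i\<in>T k. \<Sum>c\<in>children tail head i. \<beta> c) = (\<Sum>c\<in>T k - {S k}. \<beta> c)"
  proof -
    have "(\<Sum>i\<in>T k. \<Sum>c\<in>children tail head i. \<beta> c) = (\<Sum>i\<in>T k. \<Sum>c\<in>{j \<in> T k - {S k}. tpk j = i}. \<beta> c)"
      using ch_tree[OF k] by (simp add: tpk_def)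
    also have "\<dots> = (\<Sum>c\<in>T k - {S k}. \<beta> c)"
      by (rule sum.group) (use tp[OF k] in \<open>auto simp: tpk_def\<close>)
    finally show ?thesis .
  qed
  have c: "\<beta> c = \<alpha> c + \<gamma> c" if c: "c \<in> T k - {S k}" for c
  proof (cases "Y c")
    case True
    then have "Y (tpk c)" using mono[OF tp_child[OF k c]] by (simp add: tpk_def)
    then show ?thesis using True by (simp add: \<alpha>_def \<beta>_def \<gamma>_def)
  next
    case False
    then show ?thesis using c by (simp add: \<alpha>_def \<beta>_def \<gamma>_def)
  qed
  have d: "\<alpha> (S k) + \<gamma> (S k) = ln (\<sigma> (S k))" by (simp add: \<alpha>_def \<gamma>_def)
  have rT: "S k \<in> T k" by (rule root_in)
  have "(\<Sum>i\<in>T k. \<phi> i) + (\<Sum>c\<in>T k - {S k}. \<beta> c) = (\<Sum>i\<in>T k. \<alpha> i + \<gamma> i)"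
    using a by (simp add: b[symmetric] sum.distrib[symmetric])
  also have "\<dots> = (\<alpha> (S k) + \<gamma> (S k)) + (\<Sum>i\<in>T k - {S k}. \<alpha> i + \<gamma> i)"
    using rT finT by (simp add: sum.remove)
  also have "\<dots> = ln (\<sigma> (S k)) + (\<Sum>c\<in>T k - {S k}. \<beta> c)"
    using c d by simp
  finally have "(\<Sum>i\<in>T k. \<phi> i) = ln (\<sigma> (S k))" by simp
  then show ?thesis unfolding \<phi>_def \<sigma>_def tpk_def by simp
qed

end


lemma sum_if_card: "(\<Sum>t<(m::nat). if P t then a else 0) = real (card {t. t < m \<and> P t}) * (a::real)"
proof -
  have "(\<Sum>t<m. if P t then a else 0) = (\<Sum>t\<in>{t \<in> {..<m}. P t}. a)"
    by (rule sum.inter_filter[symmetric]) simp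
  also have "{t \<in> {..<m}. P t} = {t. t < m \<and> P t}" by auto
  finally show ?thesis by simp
qed

context mdata begin

lemma card_nk0:
  assumes k: "k < K" and i: "i \<in> T k"
  shows "card {t. t < n k \<and> \<not> Y k t i \<and> (i = S k \<or> Y k t (tparent tail head S k i))} =
         nk0 tail head S n obs k i"
proof (cases "i = S k")
  case True
  have "{t. t < n k \<and> \<not> Y k t i \<and> (i = S k \<or> Y k t (tparent tail head S k i))} =
        {..<n k} - {t. t < n k \<and> Y k t i}" using True by auto
  then have "card {t. t < n k \<and> \<not> Y k t i \<and> (i = S k \<or> Y k t (tparent tail head S k i))} =
        n k - card {t. t < n k \<and> Y k t i}"
  proof -
    assume e: "{t. t < n k \<and> \<not> Y k t i \<and> (i = S k \<or> Y k t (tparent tail head S k i))} =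
        {..<n k} - {t. t < n k \<and> Y k t i}"
    have "card ({..<n k} - {t. t < n k \<and> Y k t i}) = card {..<n k} - card {t. t < n k \<and> Y k t i}"
      by (rule card_Diff_subset) auto
    then show ?thesis unfolding e by simp
  qed
  then show ?thesis using True i by (simp add: nk0_def nk1_card)
next
  case False
  then have iT: "i \<in> T k - {S k}" using i by simp
  define q where "q = tparent tail head S k i"
  have qT: "q \<in> T k" using tp[OF k iT] by (simp add: q_def)
  have sub: "{t. t < n k \<and> Y k t i} \<subseteq> {t. t < n k \<and> Y k t q}"
    using Y_mono[OF tp_child[OF k iT]] by (auto simp: q_def)
  have "{t. t < n k \<and> \<not> Y k t i \<and> (i = S k \<or> Y k t (tparent tail head S k i))} =
        {t. t < n k \<and> Y k t q} - {t. t < n k \<and> Y k t i}" using False by (auto simp: q_def)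
  then have "card {t. t < n k \<and> \<not> Y k t i \<and> (i = S k \<or> Y k t (tparent tail head S k i))} =
        card {t. t < n k \<and> Y k t q} - card {t. t < n k \<and> Y k t i}"
    using sub by (simp add: card_Diff_subset)
  then show ?thesis using False i qT by (simp add: nk0_def nk1_card q_def)
qed

lemma loglik_eq:
  assumes th: "\<theta> \<in> Theta"
  shows "loglik tail head K S n obs \<theta> =
    (\<Sum>i\<in>UNIV. real (n1 tail head K S n obs i) * ln (1 - \<theta> i) +
               real (n0 tail head K S n obs i) * ln (xi_of tail head \<theta> i))"
proof -
  define a where "a i = ln (1 - \<theta> i)" for i
  define b where "b i = ln (xi_of tail head \<theta> i)" for i
  define \<phi> where "\<phi> k t i = (if Y k t i then a i
              else if i = S k \<or> Y k t (tparent tail head S k i) then b i else 0)" for k t i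
  have step: "(\<Sum>t<n k. ln (obs_prob tail head S \<theta> k (obs k t))) =
      (\<Sum>i\<in>UNIV. real (nk1 tail head S n obs k i) * a i + real (nk0 tail head S n obs k i) * b i)"
    if k: "k < K" for k
  proof -
    have "(\<Sum>t<n k. ln (obs_prob tail head S \<theta> k (obs k t))) = (\<Sum>t<n k. \<Sum>i\<in>T k. \<phi> k t i)"
    proof (rule sum.cong[OF refl])
      fix t assume "t \<in> {..<n k}"
      then have t: "t < n k" by simp
      show "ln (obs_prob tail head S \<theta> k (obs k t)) = (\<Sum>i\<in>T k. \<phi> k t i)"
        unfolding obs_prob_eq[OF k t th] \<phi>_def a_def b_def
        by (rule ln_sig_root[OF k th]) (rule Y_mono)
    qed
    also have "\<dots> = (\<Sum>i\<in>T k. \<Sum>t<n k. \<phi> k t i)" by (rule sum.swap)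
    also have "\<dots> = (\<Sum>i\<in>T k. real (nk1 tail head S n obs k i) * a i + real (nk0 tail head S n obs k i) * b i)"
    proof (rule sum.cong[OF refl])
      fix i assume i: "i \<in> T k"
      have "(\<Sum>t<n k. \<phi> k t i) = (\<Sum>t<n k. (if Y k t i then a i else 0) +
             (if \<not> Y k t i \<and> (i = S k \<or> Y k t (tparent tail head S k i)) then b i else 0))"
        by (intro sum.cong) (auto simp: \<phi>_def)
      also have "\<dots> = real (card {t. t < n k \<and> Y k t i}) * a i +
            real (card {t. t < n k \<and> \<not> Y k t i \<and> (i = S k \<or> Y k t (tparent tail head S k i))}) * b i"
        by (simp only: sum.distrib sum_if_card)
      finally show "(\<Sum>t<n k. \<phi> k t i) = real (nk1 tail head S n obs k i) * a i + real (nk0 tail head S n obs k i) * b i"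
        using i by (simp add: card_nk0[OF k i] nk1_card)
    qed
    also have "\<dots> = (\<Sum>i\<in>UNIV. real (nk1 tail head S n obs k i) * a i + real (nk0 tail head S n obs k i) * b i)"
      by (rule sum.mono_neutral_left) (auto simp: nk1_out nk0_out)
    finally show ?thesis .
  qed
  have "loglik tail head K S n obs \<theta> =
      (\<Sum>k<K. \<Sum>i\<in>UNIV. real (nk1 tail head S n obs k i) * a i + real (nk0 tail head S n obs k i) * b i)"
    unfolding loglik_def using step by simp
  also have "\<dots> = (\<Sum>i\<in>UNIV. \<Sum>k<K. real (nk1 tail head S n obs k i) * a i + real (nk0 tail head S n obs k i) * b i)"
    by (rule sum.swap)
  also have "\<dots> = (\<Sum>i\<in>UNIV. real (n1 tail head K S n obs i) * a i + real (n0 tail head K S n obs i) * b i)"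
    by (simp add: n1_def n0_def sum.distrib sum_distrib_right)
  finally show ?thesis by (simp add: a_def b_def)
qed

end


lemma two_point:
  fixes a b x :: real
  assumes a: "0 < a" and b: "0 < b" and x: "0 < x" "x < 1"
  defines "h \<equiv> 1 - a / (a + b)"
  shows "a * ln (1 - x) + b * ln x \<le> a * ln (1 - h) + b * ln h"
proof -
  define N where "N = a + b"
  have N: "0 < N" using a b by (simp add: N_def)
  have h1: "1 - h = a / N" by (simp add: h_def N_def)
  have h2: "h = b / N" using N by (simp add: h_def N_def field_simps)
  have hp: "0 < h" "0 < 1 - h" using h1 h2 a b N by auto
  have aN: "a / (1 - h) = N" using h1 a N by simp
  have bN: "b / h = N" using h2 b N by simp
  have "ln (1 - x) - ln (1 - h) \<le> ((1 - x) - (1 - h)) / (1 - h)"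
    using x hp by (intro ln_diff_le) auto
  then have "a * (ln (1 - x) - ln (1 - h)) \<le> a * (((1 - x) - (1 - h)) / (1 - h))"
    using a by (intro mult_left_mono) auto
  also have "a * (((1 - x) - (1 - h)) / (1 - h)) = (a / (1 - h)) * (h - x)" by simp
  finally have 1: "a * (ln (1 - x) - ln (1 - h)) \<le> N * (h - x)" unfolding aN .
  have "ln x - ln h \<le> (x - h) / h" using x hp by (intro ln_diff_le) auto
  then have "b * (ln x - ln h) \<le> b * ((x - h) / h)"
    using b by (intro mult_left_mono) auto
  also have "b * ((x - h) / h) = (b / h) * (x - h)" by simp
  finally have 2: "b * (ln x - ln h) \<le> N * (x - h)" unfolding bN .
  have "N * (h - x) + N * (x - h) = 0" by (simp add: algebra_simps)
  then show ?thesis using 1 2 by (simp add: algebra_simps)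
qed

context mdata begin

abbreviation "N1 \<equiv> n1 tail head K S n obs"
abbreviation "N0 \<equiv> n0 tail head K S n obs"

definition Fx :: "('e \<Rightarrow> real) \<Rightarrow> real" where
  "Fx \<xi> = (\<Sum>i\<in>UNIV. real (N1 i) * ln (1 - \<xi> i) + real (N0 i) * ln (\<xi> i)
      - real (N1 i) * ln (1 - (\<Prod>j\<in>children tail head i. \<xi> j)))"

lemma loglik_Fx:
  assumes th: "\<theta> \<in> Theta"
  shows "loglik tail head K S n obs \<theta> = Fx (xi_of tail head \<theta>)"
  unfolding loglik_eq[OF th] Fx_def
proof (rule sum.cong[OF refl])
  fix i
  define \<xi> where "\<xi> = xi_of tail head \<theta>"
  define P where "P = (\<Prod>j\<in>children tail head i. \<xi> j)"
  have t: "0 < \<theta> i" "\<theta> i < 1" using th by (auto simp: Theta_def)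
  have e: "ln (1 - \<theta> i) = ln (1 - \<xi> i) - ln (1 - P)"
  proof (cases "is_leaf tail head i")
    case True
    then show ?thesis by (simp add: \<xi>_def P_def xi_eq[of \<theta> i] is_leaf_def)
  next
    case False
    have "\<forall>j\<in>children tail head i. 0 < \<xi> j \<and> \<xi> j < 1" using xi_range[OF th] by (simp add: \<xi>_def)
    then have P: "0 < P" "P < 1" using prod_lt1[of "children tail head i" \<xi>] False
      by (auto simp: P_def is_leaf_def)
    have "1 - \<xi> i = (1 - \<theta> i) * (1 - P)" using False
      by (simp add: \<xi>_def P_def xi_eq[of \<theta> i] algebra_simps)
    then have "ln (1 - \<xi> i) = ln (1 - \<theta> i) + ln (1 - P)" using t P by (simp add: ln_mult_pos)
    then show ?thesis by simp
  qed
  show "real (N1 i) * ln (1 - \<theta> i) + real (N0 i) * ln (xi_of tail head \<theta> i) =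
         real (N1 i) * ln (1 - xi_of tail head \<theta> i) + real (N0 i) * ln (xi_of tail head \<theta> i) -
         real (N1 i) * ln (1 - (\<Prod>j\<in>children tail head i. xi_of tail head \<theta> j))"
    unfolding e \<xi>_def P_def by (simp add: right_diff_distrib)
qed

end


context mdata begin

abbreviation "rr \<equiv> rate tail head K S n obs"

lemma Fx_split:
  defines "V0 \<equiv> range tail \<union> range head"
  shows "Fx \<xi> = (\<Sum>v\<in>V0. (\<Sum>j\<in>{j. tail j = v}. real (N1 j) * ln (1 - \<xi> j) + real (N0 j) * ln (\<xi> j))
        - (\<Sum>i\<in>{i. head i = v}. real (N1 i)) * ln (1 - (\<Prod>j\<in>{j. tail j = v}. \<xi> j)))"
proof -
  have finV: "finite V0" by (simp add: V0_def)
  define A where "A j = real (N1 j) * ln (1 - \<xi> j) + real (N0 j) * ln (\<xi> j)" for j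
  define Bt where "Bt i = real (N1 i) * ln (1 - (\<Prod>j\<in>children tail head i. \<xi> j))" for i
  have 1: "(\<Sum>j\<in>UNIV. A j) = (\<Sum>v\<in>V0. \<Sum>j\<in>{j. tail j = v}. A j)"
    using sum.group[of UNIV V0 tail A] finV by (simp add: V0_def)
  have 2: "(\<Sum>i\<in>UNIV. Bt i) = (\<Sum>v\<in>V0. \<Sum>i\<in>{i. head i = v}. Bt i)"
    using sum.group[of UNIV V0 head Bt] finV by (simp add: V0_def)
  have 3: "(\<Sum>i\<in>{i. head i = v}. Bt i) =
      (\<Sum>i\<in>{i. head i = v}. real (N1 i)) * ln (1 - (\<Prod>j\<in>{j. tail j = v}. \<xi> j))" for v
  proof -
    have "(\<Sum>i\<in>{i. head i = v}. Bt i) = (\<Sum>i\<in>{i. head i = v}. real (N1 i) * ln (1 - (\<Prod>j\<in>{j. tail j = v}. \<xi> j)))"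
      by (intro sum.cong) (auto simp: Bt_def children_def)
    then show ?thesis by (simp add: sum_distrib_right)
  qed
  have "Fx \<xi> = (\<Sum>j\<in>UNIV. A j) - (\<Sum>i\<in>UNIV. Bt i)"
    unfolding Fx_def A_def Bt_def by (simp add: sum_subtractf)
  also have "\<dots> = (\<Sum>v\<in>V0. (\<Sum>j\<in>{j. tail j = v}. A j) - (\<Sum>i\<in>{i. head i = v}. Bt i))"
    unfolding 1 2 by (simp add: sum_subtractf)
  finally show ?thesis unfolding 3 A_def .
qed

lemma Fx_le:
  assumes reg: "\<forall>i. N1 i > 0 \<and> N0 i > 0"
    and xi: "\<forall>i. 0 < \<xi> i \<and> \<xi> i < 1" and xh: "\<forall>i. 0 < \<xi>h i \<and> \<xi>h i < 1"
    and hroot: "\<forall>j. parents tail head j = {} \<longrightarrow> \<xi>h j = 1 - rr j"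
    and hnon: "\<forall>j. parents tail head j \<noteq> {} \<longrightarrow> 1 - \<xi>h j = rr j * (1 - (\<Prod>l\<in>brothers tail j. \<xi>h l))"
  shows "Fx \<xi> \<le> Fx \<xi>h"
  unfolding Fx_split
proof (rule sum_mono)
  fix v
  define Bv where "Bv = {j. tail j = v}"
  define Fv where "Fv = {i. head i = v}"
  define A where "A g j = real (N1 j) * ln (1 - g j) + real (N0 j) * ln (g j)" for g :: "'e \<Rightarrow> real" and j
  define M where "M = (\<Sum>i\<in>Fv. real (N1 i))"
  have "(\<Sum>j\<in>Bv. A \<xi> j) - M * ln (1 - (\<Prod>j\<in>Bv. \<xi> j)) \<le> (\<Sum>j\<in>Bv. A \<xi>h j) - M * ln (1 - (\<Prod>j\<in>Bv. \<xi>h j))"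
  proof (cases "Bv = {}")
    case True then show ?thesis by simp
  next
    case False
    then obtain j0 where j0: "j0 \<in> Bv" by blast
    have parBv: "parents tail head j = Fv" if "j \<in> Bv" for j
      using that by (auto simp: parents_def Bv_def Fv_def)
    have brBv: "brothers tail j = Bv" if "j \<in> Bv" for j
      using that by (auto simp: brothers_def Bv_def)
    have ratej: "rr j = real (N1 j) / (real (N1 j) + real (N0 j))" for j
      by (simp add: rate_def)
    show ?thesis
    proof (cases "Fv = {}")
      case True
      then have M0: "M = 0" by (simp add: M_def)
      have "(\<Sum>j\<in>Bv. A \<xi> j) \<le> (\<Sum>j\<in>Bv. A \<xi>h j)"
      proof (rule sum_mono)
        fix j assume j: "j \<in> Bv"
        have "\<xi>h j = 1 - rr j" using hroot parBv[OF j] True by simp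
        then show "A \<xi> j \<le> A \<xi>h j" unfolding A_def ratej
          using two_point[of "real (N1 j)" "real (N0 j)" "\<xi> j"] reg xi by simp
      qed
      then show ?thesis using M0 by simp
    next
      case Fne: False
      have MB: "M = real (N1 j) + real (N0 j)" if j: "j \<in> Bv" for j
      proof -
        have "N1 j + N0 j = (\<Sum>p\<in>parents tail head j. N1 p)" using count parBv[OF j] Fne by simp
        then show ?thesis unfolding M_def parBv[OF j, symmetric] by (metis of_nat_add of_nat_sum)
      qed
      have Mpos: "0 < M" using MB[OF j0] reg by (simp add: add_pos_pos)
      have Aeq: "A g j = M * (rr j * ln (1 - g j) + (1 - rr j) * ln (g j))" if j: "j \<in> Bv" for g j
      proof -
        have "M * rr j = real (N1 j)" using MB[OF j] Mpos by (simp add: ratej)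
        moreover have "M * (1 - rr j) = real (N0 j)" using MB[OF j] Mpos by (simp add: ratej field_simps)
        moreover have "M * (rr j * ln (1 - g j) + (1 - rr j) * ln (g j)) =
            (M * rr j) * ln (1 - g j) + (M * (1 - rr j)) * ln (g j)" by (simp add: algebra_simps)
        ultimately show ?thesis unfolding A_def by simp
      qed
      have G: "(\<Sum>j\<in>Bv. A g j) - M * ln (1 - (\<Prod>j\<in>Bv. g j)) = M * GG rr g Bv" for g
      proof -
        have "(\<Sum>j\<in>Bv. A g j) = M * (\<Sum>j\<in>Bv. rr j * ln (1 - g j) + (1 - rr j) * ln (g j))"
          unfolding sum_distrib_left using Aeq by (intro sum.cong) auto
        then show ?thesis by (simp add: GG_def right_diff_distrib)
      qed
      have finB: "finite Bv" by simp
      have hB: "\<forall>l\<in>Bv. 0 < \<xi>h l \<and> \<xi>h l < 1" using xh by simp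
      have xB: "\<forall>l\<in>Bv. 0 < \<xi> l \<and> \<xi> l < 1" using xi by simp
      have mB: "\<forall>l\<in>Bv. 1 - \<xi>h l = rr l * (1 - (\<Prod>j\<in>Bv. \<xi>h j))"
      proof
        fix l assume l: "l \<in> Bv"
        then have "parents tail head l \<noteq> {}" using parBv Fne by simp
        then show "1 - \<xi>h l = rr l * (1 - (\<Prod>j\<in>Bv. \<xi>h j))" using hnon brBv[OF l] by simp
      qed
      have "GG rr \<xi> Bv \<le> GG rr \<xi>h Bv" by (rule GG_gibbs(1)[OF finB False hB mB xB])
      then show ?thesis unfolding G using Mpos by simp
    qed
  qed
  then show "(\<Sum>j\<in>{j. tail j = v}. real (N1 j) * ln (1 - \<xi> j) + real (N0 j) * ln (\<xi> j)) -
          (\<Sum>i\<in>{i. head i = v}. real (N1 i)) * ln (1 - (\<Prod>j\<in>{j. tail j = v}. \<xi> j))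
       \<le> (\<Sum>j\<in>{j. tail j = v}. real (N1 j) * ln (1 - \<xi>h j) + real (N0 j) * ln (\<xi>h j)) -
          (\<Sum>i\<in>{i. head i = v}. real (N1 i)) * ln (1 - (\<Prod>j\<in>{j. tail j = v}. \<xi>h j))"
    by (simp add: A_def M_def Bv_def Fv_def)
qed

end


context mnet begin

lemma Gamma_inv_Theta:
  assumes X: "\<xi> \<in> Xi tail head"
  shows "Gamma_inv tail head \<xi> \<in> Theta"
  unfolding Theta_def
proof (intro CollectI allI)
  fix i
  have r: "0 < \<xi> i" "\<xi> i < 1" using X by (auto simp: Xi_def)
  show "0 < Gamma_inv tail head \<xi> i \<and> Gamma_inv tail head \<xi> i < 1"
  proof (cases "is_leaf tail head i")
    case True then show ?thesis using r by (simp add: Gamma_inv_def)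
  next
    case False
    define P where "P = (\<Prod>j\<in>children tail head i. \<xi> j)"
    have "P < \<xi> i" using X False by (auto simp: Xi_def P_def)
    then have "0 < (\<xi> i - P) / (1 - P)" "(\<xi> i - P) / (1 - P) < 1" using r by auto
    then show ?thesis using False by (simp add: Gamma_inv_def P_def)
  qed
qed

lemma xi_Gamma_inv:
  assumes X: "\<xi> \<in> Xi tail head"
  shows "xi_of tail head (Gamma_inv tail head \<xi>) i = \<xi> i"
  using wf_crel
proof (induction i rule: wf_induct_rule)
  case (less i)
  define th where "th = Gamma_inv tail head \<xi>"
  show ?case
  proof (cases "is_leaf tail head i")
    case True then show ?thesis by (simp add: xi_eq[of _ i] Gamma_inv_def)
  next
    case False
    define P where "P = (\<Prod>j\<in>children tail head i. \<xi> j)"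
    have P: "P < \<xi> i" "\<xi> i < 1" using X False by (auto simp: Xi_def P_def)
    have "(\<Prod>j\<in>children tail head i. xi_of tail head th j) = P"
      unfolding P_def th_def by (intro prod.cong refl less) (simp add: crel_iff)
    then have "xi_of tail head th i = th i + (1 - th i) * P"
      using False by (simp add: xi_eq[of th i])
    also have "th i = (\<xi> i - P) / (1 - P)" using False by (simp add: th_def Gamma_inv_def P_def)
    also have "(\<xi> i - P) / (1 - P) + (1 - (\<xi> i - P) / (1 - P)) * P = \<xi> i"
    proof -
      have nz: "1 - P \<noteq> 0" using P by simp
      have e1: "1 - (\<xi> i - P) / (1 - P) = (1 - \<xi> i) / (1 - P)" using nz by (simp add: field_simps)
      have "(\<xi> i - P) / (1 - P) + (1 - \<xi> i) / (1 - P) * P = ((\<xi> i - P) + (1 - \<xi> i) * P) / (1 - P)"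
        by (simp only: add_divide_distrib times_divide_eq_left)
      also have "\<dots> = (\<xi> i * (1 - P)) / (1 - P)"
      proof -
        have "(\<xi> i - P) + (1 - \<xi> i) * P = \<xi> i * (1 - P)" by (simp add: algebra_simps)
        then show ?thesis by simp
      qed
      also have "\<dots> = \<xi> i" by (rule nonzero_mult_div_cancel_right[OF nz])
      finally show ?thesis unfolding e1 .
    qed
    finally show ?thesis by (simp add: th_def)
  qed
qed

end

theorem mainTheorem7:
  fixes tail head :: "'e::finite \<Rightarrow> 'v"
    and K :: nat and S :: "nat \<Rightarrow> 'e" and n :: "nat \<Rightarrow> nat"
    and obs :: "nat \<Rightarrow> nat \<Rightarrow> 'e set"
  assumes net: "multicast_network tail head K S"
    and data: "\<forall>k<K. \<forall>t<n k. obs k t \<subseteq> {r \<in> tree_links tail head S k. is_leaf tail head r}"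
    and reg1: "\<forall>i. n1 tail head K S n obs i > 0 \<and> n0 tail head K S n obs i > 0"
    and reg2: "\<forall>i. i \<notin> roots S K \<longrightarrow>
       (\<Sum>j \<in> parents tail head i. n1 tail head K S n obs j) < (\<Sum>j \<in> brothers tail i. n1 tail head K S n obs j)"
  shows "(let r = rate tail head K S n obs;
              \<pi> = (\<lambda>i. THE x. 0 < x \<and> x < 1 \<and> x = (\<Prod>j \<in> brothers tail i. (1 - r j) + r j * x));
              \<xi>h = (\<lambda>i. if i \<in> roots S K then 1 - r i else (1 - r i) + r i * \<pi> i)
          in (\<forall>i. i \<notin> roots S K \<longrightarrow>
                 (\<exists>!x. 0 < x \<and> x < 1 \<and> x = (\<Prod>j \<in> brothers tail i. (1 - r j) + r j * x)))
           \<and> (\<exists>!\<xi>. (\<forall>i. 0 < \<xi> i \<and> \<xi> i < 1) \<and>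
                 (\<forall>i. \<xi> i = (1 - r i) + r i * (if i \<notin> roots S K then 1 else 0) * (\<Prod>j \<in> brothers tail i. \<xi> j)))
           \<and> (\<forall>i. 0 < \<xi>h i \<and> \<xi>h i < 1)
           \<and> (\<forall>i. \<xi>h i = (1 - r i) + r i * (if i \<notin> roots S K then 1 else 0) * (\<Prod>j \<in> brothers tail i. \<xi>h j))
           \<and> (\<xi>h \<in> Xi tail head \<longrightarrow>
                 Gamma_inv tail head \<xi>h \<in> Theta \<and> is_MLE tail head K S n obs (Gamma_inv tail head \<xi>h)))"
proof -
  interpret mdata tail head K S n obs
    by unfold_locales (use net data in auto)
  define r where "r = rate tail head K S n obs"
  define \<pi> where "\<pi> = (\<lambda>i. THE x. 0 < x \<and> x < 1 \<and> x = (\<Prod>j \<in> brothers tail i. (1 - r j) + r j * x))"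
  define \<xi>h where "\<xi>h = (\<lambda>i. if i \<in> roots S K then 1 - r i else (1 - r i) + r i * \<pi> i)"
  have rpos: "0 < r i \<and> r i < 1" for i
  proof -
    have "0 < real (N1 i)" "0 < real (N0 i)" using reg1 by auto
    then show ?thesis by (simp add: r_def rate_def)
  qed
  have brother_self: "i \<in> brothers tail i" for i by (simp add: brothers_def)
  have nonroot_br: "j \<notin> roots S K" if "i \<notin> roots S K" "j \<in> brothers tail i" for i j
    using that nonroot_iff parents_brothers[of j tail i head] by simp
  have rsum: "sum r (brothers tail i) > 1" if i: "i \<notin> roots S K" for i
  proof -
    define M where "M = (\<Sum>p\<in>parents tail head i. N1 p)"
    have pne: "parents tail head i \<noteq> {}" using i nonroot_iff by simp
    have Ml: "N1 l + N0 l = M" if l: "l \<in> brothers tail i" for l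
      using count[of l] parents_brothers[OF l, of head] pne by (simp add: M_def)
    have Mpos: "0 < M" using Ml[OF brother_self[of i]] reg1 by (metis add_pos_pos)
    have "sum r (brothers tail i) = (\<Sum>l\<in>brothers tail i. real (N1 l) / real M)"
      by (intro sum.cong refl) (simp add: r_def rate_def Ml[symmetric])
    also have "\<dots> = real (\<Sum>l\<in>brothers tail i. N1 l) / real M" by (simp add: sum_divide_distrib)
    also have "\<dots> > 1"
    proof -
      have "M < (\<Sum>l\<in>brothers tail i. N1 l)" using reg2 i by (simp add: M_def)
      then have "real M < real (\<Sum>l\<in>brothers tail i. N1 l)" by (simp only: of_nat_less_iff)
      then show ?thesis using Mpos by simp
    qed
    finally show ?thesis .
  qed
  have fp: "\<exists>!x. 0 < x \<and> x < 1 \<and> x = (\<Prod>j \<in> brothers tail i. (1 - r j) + r j * x)"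
    if i: "i \<notin> roots S K" for i
  proof -
    have rB: "\<forall>l\<in>brothers tail i. 0 < r l \<and> r l < 1" using rpos by simp
    obtain x where x: "0 < x \<and> x < 1 \<and> x = (\<Prod>j \<in> brothers tail i. (1 - r j) + r j * x)"
      using fp_exists[of "brothers tail i" r, OF _ rB rsum[OF i]] by auto
    show ?thesis
    proof (rule ex1I[of _ x])
      show "0 < x \<and> x < 1 \<and> x = (\<Prod>j \<in> brothers tail i. (1 - r j) + r j * x)" by (rule x)
      fix y assume y: "0 < y \<and> y < 1 \<and> y = (\<Prod>j \<in> brothers tail i. (1 - r j) + r j * y)"
      show "y = x" using fp_unique[of "brothers tail i" r y x] rB x y by simp
    qed
  qed
  have pi_prop: "0 < \<pi> i \<and> \<pi> i < 1 \<and> \<pi> i = (\<Prod>j \<in> brothers tail i. (1 - r j) + r j * \<pi> i)"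
    if i: "i \<notin> roots S K" for i
    unfolding \<pi>_def by (rule theI'[OF fp[OF i]])
  have pi_br: "\<pi> j = \<pi> i" if "j \<in> brothers tail i" for i j
    unfolding \<pi>_def brothers_brothers[OF that] ..
  have prod_h: "(\<Prod>j\<in>brothers tail i. \<xi>h j) = \<pi> i" if i: "i \<notin> roots S K" for i
  proof -
    have "(\<Prod>j\<in>brothers tail i. \<xi>h j) = (\<Prod>j \<in> brothers tail i. (1 - r j) + r j * \<pi> i)"
    proof (rule prod.cong[OF refl])
      fix j assume j: "j \<in> brothers tail i"
      show "\<xi>h j = (1 - r j) + r j * \<pi> i" using nonroot_br[OF i j] pi_br[OF j] by (simp add: \<xi>h_def)
    qed
    then show ?thesis using pi_prop[OF i] by simp
  qed
  have hrange: "\<forall>i. 0 < \<xi>h i \<and> \<xi>h i < 1"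
  proof
    fix i
    show "0 < \<xi>h i \<and> \<xi>h i < 1"
    proof (cases "i \<in> roots S K")
      case True then show ?thesis using rpos[of i] by (simp add: \<xi>h_def)
    next
      case False
      have p: "0 < \<pi> i" "\<pi> i < 1" using pi_prop[OF False] by auto
      have "0 < r i * (1 - \<pi> i)" "r i * (1 - \<pi> i) < 1" using rpos[of i] p
        by (auto intro: mult_pos_pos) (smt (verit) mult_less_cancel_right1 mult_nonneg_nonneg)
      then show ?thesis using False by (simp add: \<xi>h_def algebra_simps)
    qed
  qed
  have heq: "\<forall>i. \<xi>h i = (1 - r i) + r i * (if i \<notin> roots S K then 1 else 0) * (\<Prod>j \<in> brothers tail i. \<xi>h j)"
  proof
    fix i
    show "\<xi>h i = (1 - r i) + r i * (if i \<notin> roots S K then 1 else 0) * (\<Prod>j \<in> brothers tail i. \<xi>h j)"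
    proof (cases "i \<in> roots S K")
      case True then show ?thesis by (simp add: \<xi>h_def)
    next
      case False then show ?thesis using prod_h[OF False] by (simp add: \<xi>h_def)
    qed
  qed
  have huniq: "\<xi> = \<xi>h" if xr: "\<forall>i. 0 < \<xi> i \<and> \<xi> i < 1"
    and xe: "\<forall>i. \<xi> i = (1 - r i) + r i * (if i \<notin> roots S K then 1 else 0) * (\<Prod>j \<in> brothers tail i. \<xi> j)" for \<xi>
  proof
    fix i
    show "\<xi> i = \<xi>h i"
    proof (cases "i \<in> roots S K")
      case True then show ?thesis using xe[rule_format, of i] by (simp add: \<xi>h_def)
    next
      case False
      define x where "x = (\<Prod>j \<in> brothers tail i. \<xi> j)"
      have x01: "0 < x \<and> x < 1" unfolding x_def
        by (rule prod_lt1) (use xr brother_self[of i] in auto)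
      have "x = (\<Prod>j \<in> brothers tail i. (1 - r j) + r j * x)"
        unfolding x_def
      proof (rule prod.cong[OF refl])
        fix j assume j: "j \<in> brothers tail i"
        have "\<xi> j = (1 - r j) + r j * (\<Prod>l \<in> brothers tail j. \<xi> l)" using xe[rule_format, of j] nonroot_br[OF False j] by simp
        then show "\<xi> j = (1 - r j) + r j * (\<Prod>j \<in> brothers tail i. \<xi> j)" using brothers_brothers[OF j] by simp
      qed
      then have "x = \<pi> i" using fp[OF False] pi_prop[OF False] x01 by blast
      then show ?thesis using xe[rule_format, of i] False by (simp add: \<xi>h_def x_def)
    qed
  qed
  have mle: "Gamma_inv tail head \<xi>h \<in> Theta \<and> is_MLE tail head K S n obs (Gamma_inv tail head \<xi>h)"
    if X: "\<xi>h \<in> Xi tail head"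
  proof -
    have thT: "Gamma_inv tail head \<xi>h \<in> Theta" by (rule Gamma_inv_Theta[OF X])
    have xih: "xi_of tail head (Gamma_inv tail head \<xi>h) = \<xi>h" using xi_Gamma_inv[OF X] by auto
    have hroot: "\<forall>j. parents tail head j = {} \<longrightarrow> \<xi>h j = 1 - rr j"
      using nonroot_iff by (auto simp: \<xi>h_def r_def)
    have hnon: "\<forall>j. parents tail head j \<noteq> {} \<longrightarrow> 1 - \<xi>h j = rr j * (1 - (\<Prod>l\<in>brothers tail j. \<xi>h l))"
    proof (intro allI impI)
      fix j assume "parents tail head j \<noteq> {}"
      then have j: "j \<notin> roots S K" using nonroot_iff by simp
      show "1 - \<xi>h j = rr j * (1 - (\<Prod>l\<in>brothers tail j. \<xi>h l))"
        unfolding prod_h[OF j] using j by (simp add: \<xi>h_def r_def algebra_simps)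
    qed
    have "loglik tail head K S n obs \<theta> \<le> loglik tail head K S n obs (Gamma_inv tail head \<xi>h)"
      if th: "\<theta> \<in> Theta" for \<theta>
    proof -
      have "loglik tail head K S n obs \<theta> = Fx (xi_of tail head \<theta>)" by (rule loglik_Fx[OF th])
      also have "\<dots> \<le> Fx \<xi>h"
        by (rule Fx_le[OF reg1 _ hrange hroot hnon]) (use xi_range[OF th] in auto)
      also have "\<dots> = loglik tail head K S n obs (Gamma_inv tail head \<xi>h)"
        using loglik_Fx[OF thT] xih by simp
      finally show ?thesis .
    qed
    then show ?thesis using thT by (simp add: is_MLE_def)
  qed
  have main: "(\<forall>i. i \<notin> roots S K \<longrightarrow>
                 (\<exists>!x. 0 < x \<and> x < 1 \<and> x = (\<Prod>j \<in> brothers tail i. (1 - r j) + r j * x)))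
           \<and> (\<exists>!\<xi>. (\<forall>i. 0 < \<xi> i \<and> \<xi> i < 1) \<and>
                 (\<forall>i. \<xi> i = (1 - r i) + r i * (if i \<notin> roots S K then 1 else 0) * (\<Prod>j \<in> brothers tail i. \<xi> j)))
           \<and> (\<forall>i. 0 < \<xi>h i \<and> \<xi>h i < 1)
           \<and> (\<forall>i. \<xi>h i = (1 - r i) + r i * (if i \<notin> roots S K then 1 else 0) * (\<Prod>j \<in> brothers tail i. \<xi>h j))
           \<and> (\<xi>h \<in> Xi tail head \<longrightarrow>
                 Gamma_inv tail head \<xi>h \<in> Theta \<and> is_MLE tail head K S n obs (Gamma_inv tail head \<xi>h))"
  proof (intro conjI)
    show "\<forall>i. i \<notin> roots S K \<longrightarrow> (\<exists>!x. 0 < x \<and> x < 1 \<and> x = (\<Prod>j \<in> brothers tail i. (1 - r j) + r j * x))"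
      using fp by blast
    show "\<exists>!\<xi>. (\<forall>i. 0 < \<xi> i \<and> \<xi> i < 1) \<and>
                 (\<forall>i. \<xi> i = (1 - r i) + r i * (if i \<notin> roots S K then 1 else 0) * (\<Prod>j \<in> brothers tail i. \<xi> j))"
      by (rule ex1I[of _ \<xi>h]) (use hrange heq huniq in \<open>blast+\<close>)
    show "\<forall>i. 0 < \<xi>h i \<and> \<xi>h i < 1" by (rule hrange)
    show "\<forall>i. \<xi>h i = (1 - r i) + r i * (if i \<notin> roots S K then 1 else 0) * (\<Prod>j \<in> brothers tail i. \<xi>h j)"
      by (rule heq)
    show "\<xi>h \<in> Xi tail head \<longrightarrow> Gamma_inv tail head \<xi>h \<in> Theta \<and> is_MLE tail head K S n obs (Gamma_inv tail head \<xi>h)"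
      using mle by blast
  qed
  show ?thesis unfolding Let_def using main[unfolded \<xi>h_def \<pi>_def r_def] .
qed

end
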